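(* There exists $\Delta_0$ such that the following holds for every simple graph $G=(V,E)$ of maximum degree $\Delta\ge\Delta_0$. Put $$p=\left\lceil \Delta^{1/6}/\ln^{1/6}\Delta\right\rceil,\qquad q=\left\lceil \Delta^{1/3}/\ln^{1/3}\Delta\right\rceil,\qquad B=\left\lceil\Delta^{2/3}\ln^{1/3}\Delta\right\rceil+6\left\lceil\Delta^{1/3}\ln^{2/3}\Delta\right\rceil,$$ and for every positive integer $\alpha$ let $$I_\alpha=\left((\alpha-1)\tfrac{\Delta^{5/3}\ln^{1/3}\Delta}{3},\ \alpha\tfrac{\Delta^{5/3}\ln^{1/3}\Delta}{3}\right].$$ Let $R(d,\Delta)$ be any given real function of $d\in\{0,\dots,\Delta\}$ and $\Delta$, and for a colouring $c_1:V\to\{1,\dots,p\}$ and a vertex $v$ of degree $d$ set $S(v)=B\,d\,c_1(v)+R(d,\Delta)$; assume $R$ is such that $S(v)\le \Delta^2$ for every vertex $v$ and every such $c_1$. Then there exist colourings $$c_1:V\to\{1,\dots,p\},\qquad c_2:E\to\{1,\dots,q\},\qquad c_3:V\cup E\to\{1,\dots,2p+q\}$$ such that for every vertex $v$, of degree $d$: (I) if $d\ge \Delta/3$, then for every $c_1^*\in\{1,\dots,p\}$ the number of neighbours $u$ of $v$ with $c_1(u)=c_1^*$ equals $d/p+f_{1,c_1^*}(v)$ with $|f_{1,c_1^*}(v)|\le\Delta^{1/2}$; (II) if $d\ge\Delta/3$, then for every $c_2^*\in\{1,\dots,q\}$ the number of neighbours $u$ of $v$ with $c_2(uv)=c_2^*$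 equals $d/q+f_{2,c_2^*}(v)$ with $|f_{2,c_2^*}(v)|\le 3\Delta^{1/3}\ln^{2/3}\Delta$; (III) $c_3(uv)=c_1(u)+c_1(v)+c_2(uv)$ holds for at least $d-(3+\varepsilon(\Delta))\Delta^{2/3}\ln^{1/3}\Delta$ neighbours $u$ of $v$, where $\varepsilon(\Delta)$ depends only on $\Delta$ and $\varepsilon(\Delta)\to0$ as $\Delta\to\infty$; (IV) for every $c_3^*\in\{1,\dots,2p+q\}$, the number of edges $uv$ incident with $v$ with $c_3(uv)=c_3^*$ is at most $\Delta^{2/3}\ln^{1/3}\Delta+5\Delta^{1/3}\ln^{2/3}\Delta$; (V) for every neighbour $u$ of $v$, if $c_3(u)=c_3(v)$ then $c_3(uv)=c_3(v)$; (VI) if $d\ge\Delta/3$, then for every integer $\alpha>0$ the number of neighbours $u$ of $v$ with $d(u)\ge\Delta/3$ and $S(u)\in I_\alpha$ is at most $\Delta^{5/6}\ln^{1/6}\Delta+\Delta^{1/2}$.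
   Context: $G$ is a simple graph, $N(v)$ denotes the set of neighbours of $v$ and $d(v)$ its degree. The colourings $c_1,c_2,c_3$ are arbitrary (not necessarily proper) maps into the indicated integer sets; $c_3$ assigns colours to both vertices and edges. *)

theory Defs
  imports Complex_Main
begin

definition simple_graph :: "'a set \<Rightarrow> ('a \<Rightarrow> 'a \<Rightarrow> bool) \<Rightarrow> bool" where
  "simple_graph V E \<longleftrightarrow> finite V \<and>
     (\<forall>u v. E u v \<longrightarrow> u \<in> V \<and> v \<in> V \<and> u \<noteq> v \<and> E v u)"

definition nbrs :: "'a set \<Rightarrow> ('a \<Rightarrow> 'a \<Rightarrow> bool) \<Rightarrow> 'a \<Rightarrow> 'a set" where
  "nbrs V E v = {u \<in> V. E v u}"

definition deg :: "'a set \<Rightarrow> ('a \<Rightarrow> 'a \<Rightarrow> bool) \<Rightarrow> 'a \<Rightarrow> nat" where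
  "deg V E v = card (nbrs V E v)"

definition max_degree :: "'a set \<Rightarrow> ('a \<Rightarrow> 'a \<Rightarrow> bool) \<Rightarrow> nat \<Rightarrow> bool" where
  "max_degree V E D \<longleftrightarrow> V \<noteq> {} \<and> D = Max (deg V E ` V)"

definition par_p :: "nat \<Rightarrow> nat" where
  "par_p D = nat \<lceil>real D powr (1/6) / ln (real D) powr (1/6)\<rceil>"

definition par_q :: "nat \<Rightarrow> nat" where
  "par_q D = nat \<lceil>real D powr (1/3) / ln (real D) powr (1/3)\<rceil>"

definition par_B :: "nat \<Rightarrow> nat" where
  "par_B D = nat \<lceil>real D powr (2/3) * ln (real D) powr (1/3)\<rceil>
            + 6 * nat \<lceil>real D powr (1/3) * ln (real D) powr (2/3)\<rceil>"

definition I_int :: "nat \<Rightarrow> nat \<Rightarrow> real set" where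
  "I_int D \<alpha> = {(real \<alpha> - 1) * (real D powr (5/3) * ln (real D) powr (1/3) / 3) <..
                 real \<alpha> * (real D powr (5/3) * ln (real D) powr (1/3) / 3)}"

end

theory Submission
  imports Defs "HOL-Library.FuncSet" "HOL-Real_Asymp.Real_Asymp"
begin

lemma ln_lower1:
  fixes d :: real assumes "0 \<le> d"
  shows "d - d^2/2 \<le> ln (1 + d)"
proof -
  let ?h = "\<lambda>x::real. ln (1 + x) - x + x^2/2"
  have "?h 0 \<le> ?h d"
  proof (rule DERIV_nonneg_imp_increasing_open[OF assms])
    fix x :: real assume x: "0 < x" "x < d"
    have "DERIV ?h x :> (1/(1+x) - 1 + x)"
      using x by (auto intro!: derivative_eq_intros)
    moreover have "1/(1+x) - 1 + x \<ge> 0"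
      using x by (simp add: field_simps power2_eq_square)
    ultimately show "\<exists>y. DERIV ?h x :> y \<and> y \<ge> 0" by blast
  next
    show "continuous_on {0..d} ?h"
      by (auto intro!: continuous_intros)
  qed
  then show ?thesis by simp
qed

lemma ln_lower2:
  fixes y :: real assumes "0 < y" "y \<le> 1"
  shows "(y - 1/y)/2 \<le> ln y"
proof -
  let ?h = "\<lambda>x::real. ln x - (x - 1/x)/2"
  have "?h y \<ge> ?h 1"
  proof (rule DERIV_nonpos_imp_decreasing_open[OF assms(2)])
    fix x :: real assume x: "y < x" "x < 1"
    have "DERIV ?h x :> (1/x - (1 + 1/x^2)/2)"
      using x assms by (auto intro!: derivative_eq_intros simp: power2_eq_square field_simps)
    moreover have "1/x - (1 + 1/x^2)/2 \<le> 0"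
    proof -
      have "1/x - (1 + 1/x^2)/2 = - ((x - 1)^2 / (2 * x^2))"
        using x assms by (simp add: field_simps power2_eq_square)
      then show ?thesis by simp
    qed
    ultimately show "\<exists>z. DERIV ?h x :> z \<and> z \<le> 0" by blast
  next
    show "continuous_on {y..1} ?h"
      using assms by (auto intro!: continuous_intros)
  qed
  then show ?thesis by simp
qed

definition dep :: "'x set \<Rightarrow> (('x \<Rightarrow> 'v) \<Rightarrow> 'r) \<Rightarrow> bool" where
  "dep T h \<longleftrightarrow> (\<forall>f g. (\<forall>x\<in>T. f x = g x) \<longrightarrow> h f = h g)"

lemma dep_mono: "dep T h \<Longrightarrow> T \<subseteq> U \<Longrightarrow> dep U h"
  unfolding dep_def by blast

lemma dep_merge:
  assumes "dep T h" "\<forall>x\<in>T. f x = g x" shows "h f = h g"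
  using assms unfolding dep_def by blast

lemma PiE_split_bij:
  assumes "T \<subseteq> X"
  shows "bij_betw (\<lambda>(a,b). (\<lambda>x. if x \<in> T then a x else b x))
           (PiE T C \<times> PiE (X - T) C) (PiE X C)"
proof (rule bij_betwI[where g = "\<lambda>f. (restrict f T, restrict f (X - T))"])
  show "(\<lambda>(a,b). (\<lambda>x. if x \<in> T then a x else b x)) \<in> PiE T C \<times> PiE (X - T) C \<rightarrow> PiE X C"
    using assms by (auto simp: PiE_iff extensional_def)
  show "(\<lambda>f. (restrict f T, restrict f (X - T))) \<in> PiE X C \<rightarrow> PiE T C \<times> PiE (X - T) C"
    using assms by fastforce
  show "(restrict ((\<lambda>(a, b) x. if x \<in> T then a x else b x) p) T,
         restrict ((\<lambda>(a, b) x. if x \<in> T then a x else b x) p) (X - T)) = p"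
    if "p \<in> PiE T C \<times> PiE (X - T) C" for p
    using that by (cases p) (auto simp: PiE_iff extensional_def fun_eq_iff)
  show "(\<lambda>(a, b) x. if x \<in> T then a x else b x) (restrict y T, restrict y (X - T)) = y"
    if "y \<in> PiE X C" for y
    using that assms by (auto simp: PiE_iff extensional_def fun_eq_iff)
qed

lemma sum_split:
  fixes g h :: "('x \<Rightarrow> 'v) \<Rightarrow> real"
  assumes "T \<subseteq> X" "dep T g" "dep (X - T) h"
  shows "(\<Sum>f\<in>PiE X C. g f * h f) = (\<Sum>a\<in>PiE T C. g a) * (\<Sum>b\<in>PiE (X - T) C. h b)"
proof -
  let ?m = "\<lambda>(a,b). (\<lambda>x. if x \<in> T then a x else b x)"
  have "(\<Sum>f\<in>PiE X C. g f * h f) = (\<Sum>p\<in>PiE T C \<times> PiE (X - T) C. g (?m p) * h (?m p))"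
    using sum.reindex_bij_betw[OF PiE_split_bij[OF assms(1)], of "\<lambda>f. g f * h f"] by simp
  also have "\<dots> = (\<Sum>p\<in>PiE T C \<times> PiE (X - T) C. g (fst p) * h (snd p))"
  proof (rule sum.cong[OF refl])
    fix p assume "p \<in> PiE T C \<times> PiE (X - T) C"
    obtain a b where p: "p = (a,b)" by (cases p)
    have "g (?m p) = g a" using p by (intro dep_merge[OF assms(2)]) auto
    moreover have "h (?m p) = h b" using p by (intro dep_merge[OF assms(3)]) auto
    ultimately show "g (?m p) * h (?m p) = g (fst p) * h (snd p)" using p by simp
  qed
  also have "\<dots> = (\<Sum>a\<in>PiE T C. g a) * (\<Sum>b\<in>PiE (X - T) C. h b)"
    by (simp add: sum_product sum.cartesian_product case_prod_beta)
  finally show ?thesis .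
qed

lemma dep_const: "dep T (\<lambda>f. c)" by (simp add: dep_def)

lemma sum_indep:
  fixes g h :: "('x \<Rightarrow> 'v) \<Rightarrow> real"
  assumes "T \<subseteq> X" "U \<subseteq> X" "T \<inter> U = {}" "dep T g" "dep U h"
  shows "real (card (PiE X C)) * (\<Sum>f\<in>PiE X C. g f * h f)
         = (\<Sum>f\<in>PiE X C. g f) * (\<Sum>f\<in>PiE X C. h f)"
proof -
  have hU: "dep (X - T) h" using assms by (auto intro: dep_mono)
  have 1: "(\<Sum>f\<in>PiE X C. g f * h f) = (\<Sum>a\<in>PiE T C. g a) * (\<Sum>b\<in>PiE (X - T) C. h b)"
    by (rule sum_split[OF assms(1,4) hU])
  have 2: "(\<Sum>f\<in>PiE X C. g f) = (\<Sum>a\<in>PiE T C. g a) * (\<Sum>b\<in>PiE (X - T) C. 1)"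
    using sum_split[OF assms(1,4) dep_const, of 1 C] by simp
  have 3: "(\<Sum>f\<in>PiE X C. h f) = (\<Sum>a\<in>PiE T C. 1) * (\<Sum>b\<in>PiE (X - T) C. h b)"
    using sum_split[OF assms(1) dep_const hU, of 1 C] by simp
  have 4: "real (card (PiE X C)) = (\<Sum>a\<in>PiE T C. 1) * (\<Sum>b\<in>PiE (X - T) C. (1::real))"
    using sum_split[OF assms(1) dep_const dep_const, of 1 1 C] by simp
  show ?thesis unfolding 1 2 3 4 by (simp add: algebra_simps)
qed

lemma PiE_pair_bij:
  assumes "x \<noteq> y"
  shows "bij_betw (\<lambda>a. (a x, a y)) (PiE {x,y} C) (C x \<times> C y)"
proof (rule bij_betwI[where g = "\<lambda>(s,r). (\<lambda>z. if z = x then s else if z = y then r else undefined)"])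
  show "(\<lambda>a. (a x, a y)) \<in> PiE {x, y} C \<rightarrow> C x \<times> C y" by auto
  show "(\<lambda>(s, r) z. if z = x then s else if z = y then r else undefined) \<in> C x \<times> C y \<rightarrow> PiE {x, y} C"
    using assms by (auto simp: PiE_iff extensional_def split: if_splits)
  show "(case (a x, a y) of (s, r) \<Rightarrow> \<lambda>z. if z = x then s else if z = y then r else undefined) = a"
    if "a \<in> PiE {x, y} C" for a
    using that by (auto simp: PiE_iff extensional_def fun_eq_iff)
  show "((case p of (s, r) \<Rightarrow> \<lambda>z. if z = x then s else if z = y then r else undefined) x,
         (case p of (s, r) \<Rightarrow> \<lambda>z. if z = x then s else if z = y then r else undefined) y) = p"
    if "p \<in> C x \<times> C y" for p
    using assms by (cases p) auto
qed

lemma sum_pair: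
  fixes \<phi> :: "'v \<Rightarrow> 'v \<Rightarrow> real"
  assumes "x \<in> X" "y \<in> X" "x \<noteq> y"
  shows "real (card (C x)) * real (card (C y)) * (\<Sum>f\<in>PiE X C. \<phi> (f x) (f y))
       = real (card (PiE X C)) * (\<Sum>p\<in>C x \<times> C y. \<phi> (fst p) (snd p))"
proof -
  let ?T = "{x,y}"
  have T: "?T \<subseteq> X" using assms by auto
  have d: "dep ?T (\<lambda>f. \<phi> (f x) (f y))" by (simp add: dep_def)
  have 1: "(\<Sum>f\<in>PiE X C. \<phi> (f x) (f y)) = (\<Sum>a\<in>PiE ?T C. \<phi> (a x) (a y)) * (\<Sum>b\<in>PiE (X - ?T) C. 1)"
    using sum_split[OF T d dep_const, of 1 C] by simp
  have 4: "real (card (PiE X C)) = (\<Sum>a\<in>PiE ?T C. 1) * (\<Sum>b\<in>PiE (X - ?T) C. (1::real))"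
    using sum_split[OF T dep_const dep_const, of 1 1 C] by simp
  have 5: "(\<Sum>a\<in>PiE ?T C. \<phi> (a x) (a y)) = (\<Sum>p\<in>C x \<times> C y. \<phi> (fst p) (snd p))"
    using sum.reindex_bij_betw[OF PiE_pair_bij[OF assms(3)], of "\<lambda>p. \<phi> (fst p) (snd p)"] by simp
  have 6: "(\<Sum>a\<in>PiE ?T C. (1::real)) = real (card (C x)) * real (card (C y))"
    using assms(3) by (simp add: card_PiE)
  show ?thesis unfolding 1 4 5 6 by (simp add: algebra_simps)
qed

definition pr :: "'v set \<Rightarrow> 'v set \<Rightarrow> ('v \<Rightarrow> 'v \<Rightarrow> bool) \<Rightarrow> real" where
  "pr A B Q = real (card {p\<in>A \<times> B. Q (fst p) (snd p)}) / (real (card A) * real (card B))"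

lemma pr_nonneg: "0 \<le> pr A B Q" by (simp add: pr_def)

lemma pr_le1:
  assumes "finite A" "finite B" shows "pr A B Q \<le> 1"
proof (cases "card A * card B = 0")
  case True then show ?thesis by (auto simp: pr_def)
next
  case False
  have "card {p\<in>A \<times> B. Q (fst p) (snd p)} \<le> card (A \<times> B)"
    using assms by (intro card_mono) auto
  then have "real (card {p\<in>A \<times> B. Q (fst p) (snd p)}) \<le> real (card A) * real (card B)"
    by (metis card_cartesian_product of_nat_le_iff of_nat_mult)
  then show ?thesis using False by (simp add: pr_def divide_le_eq_1)
qed

lemma sum_if_card:
  assumes "finite A"
  shows "(\<Sum>p\<in>A. if P p then z else (1::real)) = real (card A) + real (card {p\<in>A. P p}) * (z - 1)"
proof -
  have "(\<Sum>p\<in>A. if P p then z else (1::real)) = (\<Sum>p\<in>A. 1 + (if P p then z - 1 else 0))"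
    by (intro sum.cong) auto
  also have "\<dots> = real (card A) + (\<Sum>p\<in>{p\<in>A. P p}. z - 1)"
    using assms by (simp add: sum.distrib flip: sum.inter_filter)
  finally show ?thesis by simp
qed

lemma card_PiE_pos:
  assumes "finite X" "\<forall>x\<in>X. finite (C x)" "\<forall>x\<in>X. C x \<noteq> {}"
  shows "0 < card (PiE X C)"
  using assms by (simp add: card_PiE prod_pos card_gt_0_iff)

lemma finite_PiE':
  assumes "finite X" "\<forall>x\<in>X. finite (C x)" shows "finite (PiE X C)"
  using assms by (intro finite_PiE) auto

lemma mgf:
  fixes xs ys :: "'u \<Rightarrow> 'x" and Q :: "'u \<Rightarrow> 'v \<Rightarrow> 'v \<Rightarrow> bool" and z :: real
  assumes finX: "finite X" and finC: "\<forall>x\<in>X. finite (C x)" and cne: "\<forall>x\<in>X. C x \<noteq> {}"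
    and finN: "finite N"
    and coords: "\<forall>u\<in>N. xs u \<in> X \<and> ys u \<in> X \<and> xs u \<noteq> ys u"
    and dis: "\<forall>u\<in>N. \<forall>w\<in>N. u \<noteq> w \<longrightarrow> xs u \<noteq> xs w \<and> ys u \<noteq> ys w \<and> xs u \<noteq> ys w"
  shows "(\<Sum>f\<in>PiE X C. \<Prod>u\<in>N. (if Q u (f (xs u)) (f (ys u)) then z else 1))
        = real (card (PiE X C)) * (\<Prod>u\<in>N. 1 + pr (C (xs u)) (C (ys u)) (Q u) * (z - 1))"
  using finN coords dis
proof (induction N rule: finite_induct)
  case empty
  then show ?case by simp
next
  case (insert u N)
  let ?\<Omega> = "PiE X C"
  let ?g = "\<lambda>f. (if Q u (f (xs u)) (f (ys u)) then z else 1)"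
  let ?h = "\<lambda>f. \<Prod>w\<in>N. (if Q w (f (xs w)) (f (ys w)) then z else 1)"
  have pos: "0 < card ?\<Omega>" using card_PiE_pos[OF finX finC cne] .
  have finO: "finite ?\<Omega>" using finite_PiE'[OF finX finC] .
  have IH: "(\<Sum>f\<in>?\<Omega>. ?h f) = real (card ?\<Omega>) * (\<Prod>w\<in>N. 1 + pr (C (xs w)) (C (ys w)) (Q w) * (z - 1))"
    using insert by auto
  have cu: "xs u \<in> X" "ys u \<in> X" "xs u \<noteq> ys u" using insert by auto
  have T: "{xs u, ys u} \<subseteq> X" using cu by auto
  have U: "(\<Union>w\<in>N. {xs w, ys w}) \<subseteq> X" using insert by auto
  have TU: "{xs u, ys u} \<inter> (\<Union>w\<in>N. {xs w, ys w}) = {}"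
  proof -
    have "\<forall>w\<in>N. u \<noteq> w" using insert by auto
    then show ?thesis using insert.prems(2) by auto
  qed
  have dg: "dep {xs u, ys u} ?g" by (simp add: dep_def)
  have dh: "dep (\<Union>w\<in>N. {xs w, ys w}) ?h" unfolding dep_def
    by (auto intro!: prod.cong)
  have 1: "real (card ?\<Omega>) * (\<Sum>f\<in>?\<Omega>. ?g f * ?h f) = (\<Sum>f\<in>?\<Omega>. ?g f) * (\<Sum>f\<in>?\<Omega>. ?h f)"
    by (rule sum_indep[OF T U TU dg dh])
  have 2: "real (card (C (xs u))) * real (card (C (ys u))) * (\<Sum>f\<in>?\<Omega>. ?g f)
       = real (card ?\<Omega>) * (\<Sum>p\<in>C (xs u) \<times> C (ys u). if Q u (fst p) (snd p) then z else 1)"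
    by (rule sum_pair[OF cu])
  have fc: "finite (C (xs u) \<times> C (ys u))" using finC cu by auto
  have 3: "(\<Sum>p\<in>C (xs u) \<times> C (ys u). if Q u (fst p) (snd p) then z else 1)
      = real (card (C (xs u))) * real (card (C (ys u))) * (1 + pr (C (xs u)) (C (ys u)) (Q u) * (z - 1))"
  proof -
    have c1: "real (card (C (xs u))) \<noteq> 0" "real (card (C (ys u))) \<noteq> 0"
      using finC cne cu by (auto simp: card_gt_0_iff)
    show ?thesis unfolding sum_if_card[OF fc] pr_def using c1
      by (simp add: card_cartesian_product field_simps)
  qed
  have cp: "0 < real (card (C (xs u))) * real (card (C (ys u)))"
      using finC cne cu by (simp add: card_gt_0_iff)
  have 4: "(\<Sum>f\<in>?\<Omega>. ?g f) = real (card ?\<Omega>) * (1 + pr (C (xs u)) (C (ys u)) (Q u) * (z - 1))"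
  proof -
    let ?a = "real (card (C (xs u))) * real (card (C (ys u)))"
    have "?a * (\<Sum>f\<in>?\<Omega>. ?g f) = ?a * (real (card ?\<Omega>) * (1 + pr (C (xs u)) (C (ys u)) (Q u) * (z - 1)))"
      using 2 unfolding 3 by (simp add: ac_simps)
    then show ?thesis using cp by fastforce
  qed
  have "(\<Sum>f\<in>?\<Omega>. \<Prod>w\<in>insert u N. (if Q w (f (xs w)) (f (ys w)) then z else 1))
        = (\<Sum>f\<in>?\<Omega>. ?g f * ?h f)"
    using insert by simp
  also have "\<dots> = (\<Sum>f\<in>?\<Omega>. ?g f) * (\<Sum>f\<in>?\<Omega>. ?h f) / real (card ?\<Omega>)"
    using 1 pos by (simp add: field_simps)
  also have "\<dots> = real (card ?\<Omega>) * ((1 + pr (C (xs u)) (C (ys u)) (Q u) * (z - 1)) *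
       (\<Prod>w\<in>N. 1 + pr (C (xs w)) (C (ys w)) (Q w) * (z - 1)))"
    unfolding 4 IH using pos by (simp add: field_simps)
  also have "\<dots> = real (card ?\<Omega>) * (\<Prod>w\<in>insert u N. 1 + pr (C (xs w)) (C (ys w)) (Q w) * (z - 1))"
    using insert by simp
  finally show ?case .
qed

lemma prod_if_pow:
  assumes "finite N"
  shows "(\<Prod>u\<in>N. (if P u then z else (1::real))) = z ^ card {u\<in>N. P u}"
  using assms by (simp add: prod.inter_filter[symmetric])

lemma upper_tail:
  fixes xs ys :: "'u \<Rightarrow> 'x" and Q :: "'u \<Rightarrow> 'v \<Rightarrow> 'v \<Rightarrow> bool"
  assumes finX: "finite X" and finC: "\<forall>x\<in>X. finite (C x)" and cne: "\<forall>x\<in>X. C x \<noteq> {}"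
    and finN: "finite N"
    and coords: "\<forall>u\<in>N. xs u \<in> X \<and> ys u \<in> X \<and> xs u \<noteq> ys u"
    and dis: "\<forall>u\<in>N. \<forall>w\<in>N. u \<noteq> w \<longrightarrow> xs u \<noteq> xs w \<and> ys u \<noteq> ys w \<and> xs u \<noteq> ys w"
    and mu: "(\<Sum>u\<in>N. pr (C (xs u)) (C (ys u)) (Q u)) \<le> M" and mu0: "0 \<le> M" and t: "0 < t"
  shows "real (card {f\<in>PiE X C. M + t \<le> real (card {u\<in>N. Q u (f (xs u)) (f (ys u))})})
         \<le> exp (- (t^2) / (2 * (M + t))) * real (card (PiE X C))"
proof -
  let ?\<Omega> = "PiE X C"
  let ?cnt = "\<lambda>f. card {u\<in>N. Q u (f (xs u)) (f (ys u))}"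
  let ?S = "{f\<in>?\<Omega>. M + t \<le> real (?cnt f)}"
  define \<delta> where "\<delta> = t / (M + t)"
  define z where "z = 1 + \<delta>"
  have d0: "0 < \<delta>" "\<delta> \<le> 1" using mu0 t by (auto simp: \<delta>_def)
  have z1: "1 \<le> z" "0 < z" using d0 by (auto simp: z_def)
  have finO: "finite ?\<Omega>" using finite_PiE'[OF finX finC] .
  have a: "real (card ?S) * z powr (M + t) \<le> (\<Sum>f\<in>?\<Omega>. z ^ ?cnt f)"
  proof -
    have "real (card ?S) * z powr (M + t) = (\<Sum>f\<in>?S. z powr (M + t))" by simp
    also have "\<dots> \<le> (\<Sum>f\<in>?S. z ^ ?cnt f)"
    proof (rule sum_mono)
      fix f assume "f \<in> ?S"
      then have "z powr (M + t) \<le> z powr real (?cnt f)" using z1 by (intro powr_mono) auto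
      then show "z powr (M + t) \<le> z ^ ?cnt f" using z1 by (simp add: powr_realpow)
    qed
    also have "\<dots> \<le> (\<Sum>f\<in>?\<Omega>. z ^ ?cnt f)"
      using finO z1 by (intro sum_mono2) auto
    finally show ?thesis .
  qed
  have b: "(\<Sum>f\<in>?\<Omega>. z ^ ?cnt f) = real (card ?\<Omega>) * (\<Prod>u\<in>N. 1 + pr (C (xs u)) (C (ys u)) (Q u) * (z - 1))"
    using mgf[OF finX finC cne finN coords dis, of Q z] prod_if_pow[OF finN] by simp
  have c: "(\<Prod>u\<in>N. 1 + pr (C (xs u)) (C (ys u)) (Q u) * (z - 1)) \<le> exp (\<delta> * M)"
  proof -
    have "(\<Prod>u\<in>N. 1 + pr (C (xs u)) (C (ys u)) (Q u) * (z - 1)) \<le> (\<Prod>u\<in>N. exp (pr (C (xs u)) (C (ys u)) (Q u) * \<delta>))"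
      using z1 by (intro prod_mono) (auto simp: z_def pr_nonneg exp_ge_add_one_self)
    also have "\<dots> = exp (\<delta> * (\<Sum>u\<in>N. pr (C (xs u)) (C (ys u)) (Q u)))"
      by (simp add: exp_sum[OF finN, symmetric] sum_distrib_left mult.commute)
    also have "\<dots> \<le> exp (\<delta> * M)" using mu d0 by (simp add: mult_left_mono)
    finally show ?thesis .
  qed
  have zp: "0 < z powr (M + t)" using z1 by simp
  have "real (card ?S) \<le> real (card ?\<Omega>) * exp (\<delta> * M) / z powr (M + t)"
  proof -
    have "real (card ?S) * z powr (M + t) \<le> real (card ?\<Omega>) * exp (\<delta> * M)"
      using a b c by (metis (no_types, lifting) dual_order.trans mult_left_mono of_nat_0_le_iff)
    then show ?thesis using zp by (simp add: pos_le_divide_eq)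
  qed
  also have "\<dots> = real (card ?\<Omega>) * exp (\<delta> * M - (M + t) * ln z)"
    using z1 by (simp add: powr_def exp_diff)
  also have "\<dots> \<le> real (card ?\<Omega>) * exp (- (t^2) / (2 * (M + t)))"
  proof -
    have "\<delta> - \<delta>^2/2 \<le> ln z" unfolding z_def using ln_lower1 d0 by auto
    then have "\<delta> * M - (M + t) * ln z \<le> \<delta> * M - (M + t) * (\<delta> - \<delta>^2/2)"
      using mu0 t by (intro diff_left_mono mult_left_mono) auto
    also have "\<dots> = - (t^2) / (2 * (M + t))"
    proof -
      have mt: "M + t > 0" using mu0 t by simp
      have e: "(M + t) * \<delta> = t" unfolding \<delta>_def using mt by (simp add: field_simps)
      have "\<delta> * M - (M + t) * (\<delta> - \<delta>^2/2) = \<delta> * M - (M + t) * \<delta> + ((M + t) * \<delta>) * \<delta> / 2"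
        by (simp add: algebra_simps power2_eq_square)
      also have "\<dots> = \<delta> * M - (M + t) * \<delta> + t * \<delta> / 2" using e by simp
      also have "\<dots> = - t * \<delta> / 2" by (simp add: algebra_simps)
      also have "\<dots> = - (t^2) / (2 * (M + t))" using mt by (simp add: \<delta>_def power2_eq_square)
      finally show ?thesis .
    qed
    finally show ?thesis by (intro mult_left_mono) auto
  qed
  finally show ?thesis by (simp add: mult.commute)
qed

lemma lower_tail:
  fixes xs ys :: "'u \<Rightarrow> 'x" and Q :: "'u \<Rightarrow> 'v \<Rightarrow> 'v \<Rightarrow> bool"
  assumes finX: "finite X" and finC: "\<forall>x\<in>X. finite (C x)" and cne: "\<forall>x\<in>X. C x \<noteq> {}"
    and finN: "finite N"
    and coords: "\<forall>u\<in>N. xs u \<in> X \<and> ys u \<in> X \<and> xs u \<noteq> ys u"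
    and dis: "\<forall>u\<in>N. \<forall>w\<in>N. u \<noteq> w \<longrightarrow> xs u \<noteq> xs w \<and> ys u \<noteq> ys w \<and> xs u \<noteq> ys w"
    and m: "(\<Sum>u\<in>N. pr (C (xs u)) (C (ys u)) (Q u)) = m" and t: "0 < t" "t < m"
  shows "real (card {f\<in>PiE X C. real (card {u\<in>N. Q u (f (xs u)) (f (ys u))}) \<le> m - t})
         \<le> exp (- (t^2) / (2 * m)) * real (card (PiE X C))"
proof -
  let ?\<Omega> = "PiE X C"
  let ?cnt = "\<lambda>f. card {u\<in>N. Q u (f (xs u)) (f (ys u))}"
  let ?S = "{f\<in>?\<Omega>. real (?cnt f) \<le> m - t}"
  define \<delta> where "\<delta> = t / m"
  define z where "z = 1 - \<delta>"
  have d0: "0 < \<delta>" "\<delta> < 1" using t by (auto simp: \<delta>_def)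
  have z1: "z \<le> 1" "0 < z" using d0 by (auto simp: z_def)
  have finO: "finite ?\<Omega>" using finite_PiE'[OF finX finC] .
  have a: "real (card ?S) * z powr (m - t) \<le> (\<Sum>f\<in>?\<Omega>. z ^ ?cnt f)"
  proof -
    have "real (card ?S) * z powr (m - t) = (\<Sum>f\<in>?S. z powr (m - t))" by simp
    also have "\<dots> \<le> (\<Sum>f\<in>?S. z ^ ?cnt f)"
    proof (rule sum_mono)
      fix f assume "f \<in> ?S"
      then have "z powr (m - t) \<le> z powr real (?cnt f)" using z1 by (intro powr_mono') auto
      then show "z powr (m - t) \<le> z ^ ?cnt f" using z1 by (simp add: powr_realpow)
    qed
    also have "\<dots> \<le> (\<Sum>f\<in>?\<Omega>. z ^ ?cnt f)"
      using finO z1 by (intro sum_mono2) auto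
    finally show ?thesis .
  qed
  have b: "(\<Sum>f\<in>?\<Omega>. z ^ ?cnt f) = real (card ?\<Omega>) * (\<Prod>u\<in>N. 1 + pr (C (xs u)) (C (ys u)) (Q u) * (z - 1))"
    using mgf[OF finX finC cne finN coords dis, of Q z] prod_if_pow[OF finN] by simp
  have c: "(\<Prod>u\<in>N. 1 + pr (C (xs u)) (C (ys u)) (Q u) * (z - 1)) \<le> exp (- \<delta> * m)"
  proof -
    have "(\<Prod>u\<in>N. 1 + pr (C (xs u)) (C (ys u)) (Q u) * (z - 1)) \<le> (\<Prod>u\<in>N. exp (- pr (C (xs u)) (C (ys u)) (Q u) * \<delta>))"
    proof (intro prod_mono conjI)
      fix u assume u: "u \<in> N"
      have "pr (C (xs u)) (C (ys u)) (Q u) \<le> 1" using coords u finC by (intro pr_le1) auto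
      then have "pr (C (xs u)) (C (ys u)) (Q u) * \<delta> \<le> 1" using d0 pr_nonneg
        by (meson less_imp_le mult_le_one)
      then show "0 \<le> 1 + pr (C (xs u)) (C (ys u)) (Q u) * (z - 1)" by (simp add: z_def)
      show "1 + pr (C (xs u)) (C (ys u)) (Q u) * (z - 1) \<le> exp (- pr (C (xs u)) (C (ys u)) (Q u) * \<delta>)"
        using exp_ge_add_one_self[of "- pr (C (xs u)) (C (ys u)) (Q u) * \<delta>"] by (simp add: z_def)
    qed
    also have "\<dots> = exp (- \<delta> * (\<Sum>u\<in>N. pr (C (xs u)) (C (ys u)) (Q u)))"
      by (simp add: exp_sum[OF finN, symmetric] sum_distrib_left mult.commute)
    also have "\<dots> = exp (- \<delta> * m)" using m by simp
    finally show ?thesis .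
  qed
  have zp: "0 < z powr (m - t)" using z1 by simp
  have "real (card ?S) \<le> real (card ?\<Omega>) * exp (- \<delta> * m) / z powr (m - t)"
  proof -
    have "real (card ?S) * z powr (m - t) \<le> real (card ?\<Omega>) * exp (- \<delta> * m)"
      using a b c by (metis (no_types, lifting) dual_order.trans mult_left_mono of_nat_0_le_iff)
    then show ?thesis using zp by (simp add: pos_le_divide_eq)
  qed
  also have "\<dots> = real (card ?\<Omega>) * exp (- \<delta> * m - (m - t) * ln z)"
    using z1 by (simp add: powr_def exp_diff)
  also have "\<dots> \<le> real (card ?\<Omega>) * exp (- (t^2) / (2 * m))"
  proof -
    have "(z - 1/z)/2 \<le> ln z" using ln_lower2 z1 by auto
    then have "- \<delta> * m - (m - t) * ln z \<le> - \<delta> * m - (m - t) * ((z - 1/z)/2)"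
      using t by (intro diff_left_mono mult_left_mono) auto
    also have "\<dots> = - (t^2) / (2 * m)"
      using t by (simp add: \<delta>_def z_def field_simps power2_eq_square)
    finally show ?thesis by (intro mult_left_mono) auto
  qed
  finally show ?thesis by (simp add: mult.commute)
qed

lemma LLL:
  fixes \<Omega> :: "'b set" and I :: "'i set" and A :: "'i \<Rightarrow> 'b \<Rightarrow> bool" and \<Gamma> :: "'i \<Rightarrow> 'i set"
  assumes finO: "finite \<Omega>" and neO: "\<Omega> \<noteq> {}" and finI: "finite I" and d1: "1 \<le> d"
    and G: "\<forall>i\<in>I. card (\<Gamma> i \<inter> I) \<le> d"
    and indep: "\<forall>i\<in>I. \<forall>S. S \<subseteq> I - \<Gamma> i - {i} \<longrightarrow>
        real (card {\<omega>\<in>\<Omega>. A i \<omega> \<and> (\<forall>j\<in>S. \<not> A j \<omega>)}) \<le> P * real (card {\<omega>\<in>\<Omega>. \<forall>j\<in>S. \<not> A j \<omega>})"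
    and P0: "0 \<le> P" and P: "4 * real d * P \<le> 1"
  shows "\<exists>\<omega>\<in>\<Omega>. \<forall>i\<in>I. \<not> A i \<omega>"
proof -
  define good where "good S = {\<omega>\<in>\<Omega>. \<forall>j\<in>S. \<not> A j \<omega>}" for S
  define x :: real where "x = 1 / (2 * real d)"
  have x0: "0 < x" "x \<le> 1/2" using d1 by (auto simp: x_def field_simps)
  have dx: "real d * x = 1/2" using d1 by (simp add: x_def)
  have Px: "2 * P \<le> x" using P d1 by (simp add: x_def field_simps)
  have fing: "finite (good S)" for S using finO by (simp add: good_def)
  have claim: "\<forall>i\<in>I - S. real (card {\<omega>\<in>good S. A i \<omega>}) \<le> x * real (card (good S))"
    if "S \<subseteq> I" for S
    using that
  proof (induction "card S" arbitrary: S rule: less_induct)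
    case less
    show ?case
    proof
      fix i assume i: "i \<in> I - S"
      define S1 where "S1 = S \<inter> \<Gamma> i"
      define S2 where "S2 = S - \<Gamma> i"
      have finS: "finite S" using less.prems finI finite_subset by blast
      have S2sub: "S2 \<subseteq> I - \<Gamma> i - {i}" using less.prems i by (auto simp: S2_def)
      have e: "{\<omega>\<in>good S2. A i \<omega>} = {\<omega>\<in>\<Omega>. A i \<omega> \<and> (\<forall>j\<in>S2. \<not> A j \<omega>)}"
        by (auto simp: good_def)
      have "real (card {\<omega>\<in>\<Omega>. A i \<omega> \<and> (\<forall>j\<in>S2. \<not> A j \<omega>)}) \<le> P * real (card (good S2))"
        using indep i S2sub unfolding good_def by blast
      then have ind2: "real (card {\<omega>\<in>good S2. A i \<omega>}) \<le> P * real (card (good S2))"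
        unfolding e .
      show "real (card {\<omega>\<in>good S. A i \<omega>}) \<le> x * real (card (good S))"
      proof (cases "S1 = {}")
        case True
        then have "S2 = S" by (auto simp: S1_def S2_def)
        then have "real (card {\<omega>\<in>good S. A i \<omega>}) \<le> P * real (card (good S))" using ind2 by simp
        also have "\<dots> \<le> x * real (card (good S))" using Px P0 by (intro mult_right_mono) auto
        finally show ?thesis .
      next
        case False
        have lt: "card S2 < card S"
          using False finS by (intro psubset_card_mono) (auto simp: S1_def S2_def)
        have S2I: "S2 \<subseteq> I" using less.prems by (auto simp: S2_def)
        have IH: "\<forall>j\<in>I - S2. real (card {\<omega>\<in>good S2. A j \<omega>}) \<le> x * real (card (good S2))"
          using less.hyps[OF lt S2I] .
        have S1I: "S1 \<subseteq> I - S2" using less.prems by (auto simp: S1_def S2_def)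
        have cS1: "card S1 \<le> d"
        proof -
          have "card S1 \<le> card (\<Gamma> i \<inter> I)"
            using less.prems finI by (intro card_mono) (auto simp: S1_def)
          then show ?thesis using G i by fastforce
        qed
        have finS1: "finite S1" using finS by (simp add: S1_def)
        have cover: "good S2 \<subseteq> good S \<union> (\<Union>j\<in>S1. {\<omega>\<in>good S2. A j \<omega>})"
          by (auto simp: good_def S1_def S2_def)
        have "real (card (good S2)) \<le> real (card (good S) + card (\<Union>j\<in>S1. {\<omega>\<in>good S2. A j \<omega>}))"
        proof -
          have "card (good S2) \<le> card (good S \<union> (\<Union>j\<in>S1. {\<omega>\<in>good S2. A j \<omega>}))"
            using fing finS1 by (intro card_mono[OF _ cover]) auto
          also have "\<dots> \<le> card (good S) + card (\<Union>j\<in>S1. {\<omega>\<in>good S2. A j \<omega>})"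
            by (rule card_Un_le)
          finally show ?thesis by simp
        qed
        also have "\<dots> \<le> real (card (good S)) + (\<Sum>j\<in>S1. real (card {\<omega>\<in>good S2. A j \<omega>}))"
        proof -
          have "card (\<Union>j\<in>S1. {\<omega>\<in>good S2. A j \<omega>}) \<le> (\<Sum>j\<in>S1. card {\<omega>\<in>good S2. A j \<omega>})"
            by (rule card_UN_le[OF finS1])
          then show ?thesis by (simp add: of_nat_sum[symmetric] del: of_nat_sum)
        qed
        also have "\<dots> \<le> real (card (good S)) + (\<Sum>j\<in>S1. x * real (card (good S2)))"
          using IH S1I by (intro add_left_mono sum_mono) auto
        also have "\<dots> \<le> real (card (good S)) + real d * x * real (card (good S2))"
          using cS1 x0 by (simp add: mult_right_mono)
        also have "\<dots> = real (card (good S)) + real (card (good S2)) / 2"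
          using dx by simp
        finally have half: "real (card (good S2)) \<le> 2 * real (card (good S))" by simp
        have "real (card {\<omega>\<in>good S. A i \<omega>}) \<le> real (card {\<omega>\<in>good S2. A i \<omega>})"
          using finO by (intro of_nat_mono card_mono) (auto simp: good_def S2_def)
        also have "\<dots> \<le> P * real (card (good S2))" by (rule ind2)
        also have "\<dots> \<le> P * (2 * real (card (good S)))" using half P0 by (intro mult_left_mono)
        also have "\<dots> = (2 * P) * real (card (good S))" by simp
        also have "\<dots> \<le> x * real (card (good S))" using Px by (intro mult_right_mono) auto
        finally show ?thesis .
      qed
    qed
  qed
  have lower: "real (card (good S)) \<ge> (1 - x) ^ card S * real (card \<Omega>)" if "S \<subseteq> I" for S
  proof -
    have "finite S" using that finI finite_subset by blast
    then show ?thesis using that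
    proof (induction S rule: finite_induct)
      case empty
      then show ?case by (simp add: good_def)
    next
      case (insert i S)
      have eq: "good (insert i S) = good S - {\<omega>\<in>good S. A i \<omega>}" by (auto simp: good_def)
      have "real (card (good (insert i S))) = real (card (good S)) - real (card {\<omega>\<in>good S. A i \<omega>})"
        unfolding eq using fing by (subst card_Diff_subset) (auto simp: of_nat_diff card_mono)
      also have "\<dots> \<ge> real (card (good S)) - x * real (card (good S))"
        using claim[of S] insert by auto
      finally have "real (card (good (insert i S))) \<ge> (1 - x) * real (card (good S))"
        by (simp add: algebra_simps)
      moreover have "(1 - x) * real (card (good S)) \<ge> (1 - x) * ((1 - x) ^ card S * real (card \<Omega>))"
        using insert x0 by (intro mult_left_mono) auto
      ultimately show ?case using insert by simp
    qed
  qed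
  have "(1 - x) ^ card I * real (card \<Omega>) > 0"
    using x0 finO neO by (simp add: card_gt_0_iff)
  then have "card (good I) > 0" using lower[of I] by simp
  then show ?thesis by (auto simp: good_def card_gt_0_iff)
qed

definition mu0 :: "real \<Rightarrow> real" where "mu0 x = x powr (2/3) * ln x powr (1/3)"
definition mu1 :: "real \<Rightarrow> real" where "mu1 x = x powr (5/6) * ln x powr (1/6)"
definition t2 :: "real \<Rightarrow> real" where "t2 x = 3 * x powr (1/3) * ln x powr (2/3)"
definition t4 :: "real \<Rightarrow> real" where "t4 x = 5 * x powr (1/3) * ln x powr (2/3)"
definition t3 :: "real \<Rightarrow> real" where "t3 x = x powr (-1/6) * mu0 x"
definition pb :: "real \<Rightarrow> real" where "pb x = x powr (1/6) / ln x powr (1/6) + 1"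
definition qb :: "real \<Rightarrow> real" where "qb x = x powr (1/3) / ln x powr (1/3) + 1"
definition Ptot :: "real \<Rightarrow> real" where
  "Ptot x = (2 * pb x + x) * x powr (-10) + 2 * qb x * x powr (-4)
          + (2 * pb x + qb x)^2 * x powr (-10) + (2 * pb x + qb x)^3 * x powr (-10)"

definition big :: "real \<Rightarrow> bool" where
  "big x \<longleftrightarrow> 3 \<le> x \<and>
     sqrt x < (x/3) / pb x \<and>
     t2 x < (x/3) / qb x \<and>
     x \<le> x powr (5/3) * ln x powr (1/3) / 3 \<and>
     10 * ln x \<le> (sqrt x)^2 / (2 * (mu1 x + sqrt x)) \<and>
     4 * ln x \<le> (t2 x)^2 / (2 * (mu0 x + t2 x)) \<and>
     10 * ln x \<le> (t3 x)^2 / (2 * (3 * mu0 x + t3 x)) \<and>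
     10 * ln x \<le> (t4 x)^2 / (2 * (mu0 x + t4 x)) \<and>
     4 * (x + x^2) * Ptot x \<le> 1"

lemma big_eventually: "eventually big at_top"
proof -
  have 1: "eventually (\<lambda>x::real. 3 \<le> x) at_top" by real_asymp
  have 2: "eventually (\<lambda>x. sqrt x < (x/3) / pb x) at_top" unfolding pb_def by real_asymp
  have 3: "eventually (\<lambda>x. t2 x < (x/3) / qb x) at_top" unfolding t2_def qb_def by real_asymp
  have 4: "eventually (\<lambda>x::real. x \<le> x powr (5/3) * ln x powr (1/3) / 3) at_top" by real_asymp
  have 5: "eventually (\<lambda>x. 10 * ln x \<le> (sqrt x)^2 / (2 * (mu1 x + sqrt x))) at_top"
    unfolding mu1_def by real_asymp
  have 6: "eventually (\<lambda>x. 4 * ln x \<le> (t2 x)^2 / (2 * (mu0 x + t2 x))) at_top"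
    unfolding mu0_def t2_def by real_asymp
  have 7: "eventually (\<lambda>x. 10 * ln x \<le> (t3 x)^2 / (2 * (3 * mu0 x + t3 x))) at_top"
    unfolding mu0_def t3_def by real_asymp
  have 8: "eventually (\<lambda>x. 10 * ln x \<le> (t4 x)^2 / (2 * (mu0 x + t4 x))) at_top"
    unfolding mu0_def t4_def by real_asymp
  have 9: "eventually (\<lambda>x. 4 * (x + x^2) * Ptot x \<le> 1) at_top"
    unfolding Ptot_def pb_def qb_def by real_asymp
  show ?thesis unfolding big_def by (intro eventually_conj 1 2 3 4 5 6 7 8 9)
qed

definition val :: "nat \<times> nat \<Rightarrow> nat \<times> nat \<Rightarrow> nat \<times> nat \<Rightarrow> nat" where
  "val a s r = (if snd s = snd a then snd a
      else if fst s + fst a + fst r = snd s \<or> fst s + fst a + fst r = snd a then snd r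
      else fst s + fst a + fst r)"

lemma val_sym: "val a s r = val s a r"
  unfolding val_def by (auto simp: add.commute)

definition viol :: "nat \<times> nat \<Rightarrow> nat \<times> nat \<Rightarrow> nat \<times> nat \<Rightarrow> bool" where
  "viol a s r \<longleftrightarrow> snd s = snd a \<or> fst s + fst a + fst r = snd s \<or> fst s + fst a + fst r = snd a"

lemma not_viol: "\<not> viol a s r \<Longrightarrow> val a s r = fst s + fst a + fst r"
  unfolding viol_def val_def by auto

lemma pr_le:
  assumes "card {pq\<in>A \<times> B. Q (fst pq) (snd pq)} \<le> n"
  shows "pr A B Q \<le> real n / (real (card A) * real (card B))"
  unfolding pr_def using assms by (intro divide_right_mono) auto

context
  fixes p q W :: nat
  assumes p1: "1 \<le> p" and q1: "1 \<le> q" and Wd: "W = 2*p+q-2"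
begin

abbreviation "Cv \<equiv> {1..p} \<times> {3..2*p+q}"
abbreviation "Ce \<equiv> {1..q} \<times> {1..(2::nat)}"

lemma cardCv: "card Cv = p * W" by (simp add: card_cartesian_product Wd)
lemma cardCe: "card Ce = 2 * q" by (simp add: card_cartesian_product)
lemma W_ge: "q \<le> W" "0 < W" using p1 q1 Wd by auto

lemma pr_I:
  assumes "k \<in> {1..p}"
  shows "pr Cv Ce (\<lambda>s r. fst s = k) = 1 / real p"
proof -
  have "{pq\<in>Cv \<times> Ce. fst (fst pq) = k} = ({k} \<times> {3..2*p+q}) \<times> Ce" using assms by auto
  then have "card {pq\<in>Cv \<times> Ce. fst (fst pq) = k} = W * (2*q)"
    by (simp add: card_cartesian_product Wd)
  moreover have "real W > 0" using W_ge by simp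
  ultimately show ?thesis unfolding pr_def cardCv cardCe using p1 q1
    by (simp add: field_simps)
qed

lemma pr_II:
  assumes "k \<in> {1..q}"
  shows "pr Cv Ce (\<lambda>s r. fst r = k) = 1 / real q"
proof -
  have "{pq\<in>Cv \<times> Ce. fst (snd pq) = k} = Cv \<times> ({k} \<times> {1..2})" using assms by auto
  then have "card {pq\<in>Cv \<times> Ce. fst (snd pq) = k} = p * W * 2"
    by (simp add: card_cartesian_product Wd)
  moreover have "real W > 0" using W_ge by simp
  ultimately show ?thesis unfolding pr_def cardCv cardCe using p1 q1
    by (simp add: field_simps)
qed

lemma card_S1: "card ((\<lambda>(c,r). ((c, y0), r)) ` ({1..p} \<times> Ce)) \<le> p * (2*q)"
  by (rule order_trans[OF card_image_le]) (auto simp: card_cartesian_product)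

lemma card_S2: "card ((\<lambda>((c,y),w). ((c,y),(c0 - c - c1, w))) ` (Cv \<times> {1..(2::nat)})) \<le> p * W * 2"
  by (rule order_trans[OF card_image_le]) (auto simp: card_cartesian_product Wd)

lemma card_S3: "card ((\<lambda>(c,(y,w)). ((c, c + c1 + y),(y,w))) ` ({1..p} \<times> Ce)) \<le> p * (2*q)"
  by (rule order_trans[OF card_image_le]) (auto simp: card_cartesian_product)

lemma card_S2k: "card ((\<lambda>(c,y). ((c,y),(c0 - c - c1, k))) ` Cv) \<le> p * W"
  by (rule order_trans[OF card_image_le]) (auto simp: card_cartesian_product Wd)

lemma card_S3k: "card ((\<lambda>(c,y). ((c, c + c1 + y),(y,k))) ` ({1..p} \<times> {1..q})) \<le> p * q"
  by (rule order_trans[OF card_image_le]) (auto simp: card_cartesian_product)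

lemma pr_III:
  assumes "a \<in> Cv"
  shows "pr Cv Ce (viol a) \<le> 3 / real q"
proof -
  let ?S1 = "(\<lambda>(c,r). ((c, snd a), r)) ` ({1..p} \<times> Ce)"
  let ?S2 = "(\<lambda>((c,y),w). ((c,y),(snd a - c - fst a, w))) ` (Cv \<times> {1..(2::nat)})"
  let ?S3 = "(\<lambda>(c,(y,w)). ((c, c + fst a + y),(y,w))) ` ({1..p} \<times> Ce)"
  have sub: "{pq\<in>Cv \<times> Ce. viol a (fst pq) (snd pq)} \<subseteq> ?S1 \<union> ?S2 \<union> ?S3"
  proof
    fix pq assume pq: "pq \<in> {pq\<in>Cv \<times> Ce. viol a (fst pq) (snd pq)}"
    obtain c y y' w where e: "pq = ((c,y),(y',w))" by (metis prod.collapse)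
    show "pq \<in> ?S1 \<union> ?S2 \<union> ?S3"
    proof -
      consider "y = snd a" | "c + fst a + y' = y" | "c + fst a + y' = snd a"
        using pq e by (auto simp: viol_def)
      then show ?thesis
      proof cases
        case 1 then have "pq \<in> ?S1" using pq e by (auto intro!: image_eqI[where x="(c,(y',w))"])
        then show ?thesis by blast
      next
        case 2 then have "pq \<in> ?S3" using pq e by (auto intro!: image_eqI[where x="(c,(y',w))"])
        then show ?thesis by blast
      next
        case 3 then have "pq \<in> ?S2" using pq e by (auto intro!: image_eqI[where x="((c,y),w)"])
        then show ?thesis by blast
      qed
    qed
  qed
  have "card {pq\<in>Cv \<times> Ce. viol a (fst pq) (snd pq)} \<le> card (?S1 \<union> ?S2 \<union> ?S3)"
    by (intro card_mono[OF _ sub]) auto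
  also have "\<dots> \<le> card ?S1 + card ?S2 + card ?S3"
    by (meson card_Un_le add_right_mono order_trans)
  also have "\<dots> \<le> p * (2*q) + p * W * 2 + p * (2*q)"
    using card_S1 card_S2 card_S3 by (intro add_mono) auto
  finally have c: "card {pq\<in>Cv \<times> Ce. viol a (fst pq) (snd pq)} \<le> p * (2*q) + p * W * 2 + p * (2*q)" .
  have "pr Cv Ce (viol a) \<le> real (p * (2*q) + p * W * 2 + p * (2*q)) / (real (card Cv) * real (card Ce))"
    by (rule pr_le[OF c])
  also have "\<dots> = 2 / real W + 1 / real q"
  proof -
    have "real W > 0" using W_ge by simp
    then show ?thesis unfolding cardCv cardCe using p1 q1
      by (simp add: field_simps)
  qed
  also have "\<dots> \<le> 3 / real q"
  proof -
    have "2 / real W \<le> 2 / real q" using W_ge q1 by (intro divide_left_mono) auto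
    then show ?thesis by simp
  qed
  finally show ?thesis .
qed


lemma pr_IV:
  assumes a: "a \<in> Cv"
  shows "pr Cv Ce (\<lambda>s r. val a s r = k) \<le> 1 / real q"
proof -
  have Wp: "real W > 0" "real q \<le> real W" using W_ge by auto
  have a3: "3 \<le> snd a" "1 \<le> fst a" using a by auto
  consider "k = snd a" | "k \<noteq> snd a" "k \<le> 2" | "k \<noteq> snd a" "3 \<le> k" by linarith
  then show ?thesis
  proof cases
    case 1
    let ?S = "(\<lambda>(c,r). ((c, snd a), r)) ` ({1..p} \<times> Ce)"
    have sub: "{pq\<in>Cv \<times> Ce. val a (fst pq) (snd pq) = k} \<subseteq> ?S"
    proof
      fix pq assume pq: "pq \<in> {pq\<in>Cv \<times> Ce. val a (fst pq) (snd pq) = k}"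
      obtain c y y' w where e: "pq = ((c,y),(y',w))" by (metis prod.collapse)
      have "y = snd a" using pq e 1 a3 by (auto simp: val_def split: if_splits)
      then show "pq \<in> ?S" using pq e by (auto intro!: image_eqI[where x="(c,(y',w))"])
    qed
    have c: "card {pq\<in>Cv \<times> Ce. val a (fst pq) (snd pq) = k} \<le> p * (2*q)"
      using card_mono[OF _ sub] card_S1[of "snd a"] by (meson finite_imageI finite_SigmaI finite_atLeastAtMost order_trans)
    have "pr Cv Ce (\<lambda>s r. val a s r = k) \<le> real (p * (2*q)) / (real (card Cv) * real (card Ce))"
      by (rule pr_le[OF c])
    also have "\<dots> = 1 / real W" unfolding cardCv cardCe using p1 q1 Wp by (simp add: field_simps)
    also have "\<dots> \<le> 1 / real q" using Wp q1 by (intro divide_left_mono) auto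
    finally show ?thesis .
  next
    case 2
    let ?S2 = "(\<lambda>(c,y). ((c,y),(snd a - c - fst a, k))) ` Cv"
    let ?S3 = "(\<lambda>(c,y). ((c, c + fst a + y),(y,k))) ` ({1..p} \<times> {1..q})"
    have sub: "{pq\<in>Cv \<times> Ce. val a (fst pq) (snd pq) = k} \<subseteq> ?S2 \<union> ?S3"
    proof
      fix pq assume pq: "pq \<in> {pq\<in>Cv \<times> Ce. val a (fst pq) (snd pq) = k}"
      obtain c y y' w where e: "pq = ((c,y),(y',w))" by (metis prod.collapse)
      have ne: "y \<noteq> snd a" using pq e 2 by (auto simp: val_def)
      have col: "c + fst a + y' = y \<or> c + fst a + y' = snd a" and wk: "w = k"
        using pq e 2 ne a3 by (auto simp: val_def split: if_splits)
      show "pq \<in> ?S2 \<union> ?S3"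
        using col
      proof
        assume "c + fst a + y' = y"
        then have "pq \<in> ?S3" using pq e wk by (auto intro!: image_eqI[where x="(c,y')"])
        then show ?thesis by blast
      next
        assume "c + fst a + y' = snd a"
        then have "pq \<in> ?S2" using pq e wk by (auto intro!: image_eqI[where x="(c,y)"])
        then show ?thesis by blast
      qed
    qed
    have "card {pq\<in>Cv \<times> Ce. val a (fst pq) (snd pq) = k} \<le> card (?S2 \<union> ?S3)"
      by (intro card_mono[OF _ sub]) auto
    also have "\<dots> \<le> card ?S2 + card ?S3" by (rule card_Un_le)
    also have "\<dots> \<le> p * W + p * q" using card_S2k card_S3k by (intro add_mono) auto
    finally have c: "card {pq\<in>Cv \<times> Ce. val a (fst pq) (snd pq) = k} \<le> p * W + p * q" .
    have "pr Cv Ce (\<lambda>s r. val a s r = k) \<le> real (p * W + p * q) / (real (card Cv) * real (card Ce))"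
      by (rule pr_le[OF c])
    also have "\<dots> = 1 / (2 * real q) + 1 / (2 * real W)"
      unfolding cardCv cardCe using p1 q1 Wp by (simp add: field_simps)
    also have "\<dots> \<le> 1 / real q"
    proof -
      have "1 / (2 * real W) \<le> 1 / (2 * real q)" using Wp q1 by (intro divide_left_mono) auto
      then show ?thesis by simp
    qed
    finally show ?thesis .
  next
    case 3
    let ?S = "(\<lambda>((c,y),w). ((c,y),(k - c - fst a, w))) ` (Cv \<times> {1..(2::nat)})"
    have sub: "{pq\<in>Cv \<times> Ce. val a (fst pq) (snd pq) = k} \<subseteq> ?S"
    proof
      fix pq assume pq: "pq \<in> {pq\<in>Cv \<times> Ce. val a (fst pq) (snd pq) = k}"
      obtain c y y' w where e: "pq = ((c,y),(y',w))" by (metis prod.collapse)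
      have "c + fst a + y' = k" using pq e 3 by (auto simp: val_def split: if_splits)
      then show "pq \<in> ?S" using pq e by (auto intro!: image_eqI[where x="((c,y),w)"])
    qed
    have c: "card {pq\<in>Cv \<times> Ce. val a (fst pq) (snd pq) = k} \<le> p * W * 2"
      using card_mono[OF _ sub] card_S2[of k "fst a"] by (meson finite_imageI finite_SigmaI finite_atLeastAtMost order_trans)
    have "pr Cv Ce (\<lambda>s r. val a s r = k) \<le> real (p * W * 2) / (real (card Cv) * real (card Ce))"
      by (rule pr_le[OF c])
    also have "\<dots> = 1 / real q" unfolding cardCv cardCe using p1 q1 Wp by (simp add: field_simps)
    finally show ?thesis .
  qed
qed

lemma pr_VI:
  assumes uniq: "\<forall>c c'. P c \<longrightarrow> P c' \<longrightarrow> c = c'"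
  shows "pr Cv Ce (\<lambda>s r. P (fst s)) \<le> 1 / real p"
proof (cases "\<exists>c. P c")
  case True
  then obtain c0 where c0: "P c0" by blast
  have Wp: "real W > 0" using W_ge by auto
  let ?S = "(\<lambda>(y,r). ((c0,y),r)) ` ({3..2*p+q} \<times> Ce)"
  have sub: "{pq\<in>Cv \<times> Ce. P (fst (fst pq))} \<subseteq> ?S"
  proof
    fix pq assume pq: "pq \<in> {pq\<in>Cv \<times> Ce. P (fst (fst pq))}"
    obtain c y r where e: "pq = ((c,y),r)" by (metis prod.collapse)
    have "c = c0" using uniq c0 pq e by auto
    then show "pq \<in> ?S" using pq e by (auto intro!: image_eqI[where x="(y,r)"])
  qed
  have "card ?S \<le> W * (2*q)"
    by (rule order_trans[OF card_image_le]) (auto simp: card_cartesian_product Wd)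
  then have c: "card {pq\<in>Cv \<times> Ce. P (fst (fst pq))} \<le> W * (2*q)"
    using card_mono[OF _ sub] by (meson finite_imageI finite_SigmaI finite_atLeastAtMost order_trans)
  have "pr Cv Ce (\<lambda>s r. P (fst s)) \<le> real (W * (2*q)) / (real (card Cv) * real (card Ce))"
    by (rule pr_le) (use c in simp)
  also have "\<dots> = 1 / real p" unfolding cardCv cardCe using p1 q1 Wp by (simp add: field_simps)
  finally show ?thesis .
next
  case False
  then have e: "{pq\<in>Cv \<times> Ce. P (fst (fst pq))} = {}" by auto
  show ?thesis unfolding pr_def e by simp
qed

end

lemma powr_split1: "0 < (x::real) \<Longrightarrow> x powr a * x powr (1 - a) = x"
  by (simp add: powr_add[symmetric])

lemma id_mu1: assumes "1 < (x::real)"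
  shows "x / (x powr (1/6) / ln x powr (1/6)) = mu1 x"
proof -
  have l: "0 < ln x" using assms by simp
  have "x = x powr (1/6) * x powr (5/6)" using powr_split1[of x "1/6"] assms by simp
  then show ?thesis unfolding mu1_def using assms l by (simp add: field_simps)
qed

lemma id_mu0: assumes "1 < (x::real)"
  shows "x / (x powr (1/3) / ln x powr (1/3)) = mu0 x"
proof -
  have l: "0 < ln x" using assms by simp
  have "x = x powr (1/3) * x powr (2/3)" using powr_split1[of x "1/3"] assms by simp
  then show ?thesis unfolding mu0_def using assms l by (simp add: field_simps)
qed

lemma L_eq: assumes "1 < (x::real)"
  shows "mu0 x * x / 3 = x powr (5/3) * ln x powr (1/3) / 3"
proof -
  have "x powr (2/3) * x = x powr (2/3) * x powr 1" using assms by simp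
  also have "\<dots> = x powr (5/3)" by (subst powr_add[symmetric]) simp
  finally have "x powr (2/3) * x = x powr (5/3)" .
  then show ?thesis unfolding mu0_def by (simp add: ac_simps)
qed

lemma exp_mono_M:
  fixes M M' t :: real
  assumes "0 \<le> M" "M \<le> M'" "0 < t"
  shows "exp (- (t^2) / (2 * (M + t))) \<le> exp (- (t^2) / (2 * (M' + t)))"
  using assms by (simp add: frac_le)

lemma exp_mono_low:
  fixes m M' t :: real
  assumes "0 < m" "m \<le> M'" "0 < t"
  shows "exp (- (t^2) / (2 * m)) \<le> exp (- (t^2) / (2 * (M' + t)))"
  using assms by (simp add: frac_le)

lemma exp_to_powr:
  fixes x y K :: real
  assumes "K * ln x \<le> y" "0 < x"
  shows "exp (- y) \<le> x powr (- K)"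
  using assms by (simp add: powr_def)

lemma sum_ind_card:
  assumes "finite A"
  shows "(\<Sum>f\<in>A. if P f then 1 else (0::real)) = real (card {f\<in>A. P f})"
  using assms by (simp add: sum.inter_filter[symmetric])

lemma card_union_bound:
  fixes A :: "'k \<Rightarrow> 'b set"
  assumes "finite K" "\<forall>k\<in>K. finite (A k)" "\<forall>k\<in>K. real (card (A k)) \<le> b" "S \<subseteq> (\<Union>k\<in>K. A k)"
  shows "real (card S) \<le> real (card K) * b"
proof -
  have "card S \<le> card (\<Union>k\<in>K. A k)" using assms by (intro card_mono) auto
  also have "\<dots> \<le> (\<Sum>k\<in>K. card (A k))" by (rule card_UN_le[OF assms(1)])
  finally have "real (card S) \<le> (\<Sum>k\<in>K. real (card (A k)))" by (simp flip: of_nat_sum)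
  also have "\<dots> \<le> (\<Sum>k\<in>K. b)" using assms(3) by (intro sum_mono) auto
  finally show ?thesis by simp
qed

locale setting =
  fixes V :: "'a set" and E :: "'a \<Rightarrow> 'a \<Rightarrow> bool" and D :: nat and R :: "nat \<Rightarrow> nat \<Rightarrow> real"
  assumes sg: "simple_graph V E" and md: "max_degree V E D" and bigD: "big (real D)"
    and hypS: "\<forall>v\<in>V. \<forall>k\<in>{1..par_p D}. real (par_B D * deg V E v * k) + R (deg V E v) D \<le> real D ^ 2"
begin

abbreviation "x \<equiv> real D"
abbreviation "p \<equiv> par_p D"
abbreviation "q \<equiv> par_q D"
abbreviation "W \<equiv> 2 * p + q - 2"
abbreviation "NB v \<equiv> nbrs V E v"

lemma finV: "finite V" using sg by (simp add: simple_graph_def)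
lemma Eprops: "E u v \<Longrightarrow> u \<in> V \<and> v \<in> V \<and> u \<noteq> v \<and> E v u"
  using sg by (simp add: simple_graph_def)
lemma nb_sub: "NB v \<subseteq> V" by (auto simp: nbrs_def)
lemma fin_nb: "finite (NB v)" using finV nb_sub finite_subset by blast
lemma nb_E: "u \<in> NB v \<Longrightarrow> E v u \<and> u \<in> V \<and> u \<noteq> v"
  using Eprops by (auto simp: nbrs_def)
lemma nb_sym: "u \<in> NB v \<Longrightarrow> v \<in> NB u"
  using Eprops by (auto simp: nbrs_def)
lemma deg_le: "v \<in> V \<Longrightarrow> deg V E v \<le> D"
  using md finV by (auto simp: max_degree_def)
lemma card_nb: "card (NB v) = deg V E v" by (simp add: deg_def)

lemma x3: "3 \<le> x" using bigD by (simp add: big_def)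
lemma x1: "1 < x" using x3 by simp
lemma lnpos: "0 < ln x" using x1 by simp

lemma p_ge: "x powr (1/6) / ln x powr (1/6) \<le> real p"
  unfolding par_p_def by (rule real_nat_ceiling_ge)
lemma q_ge: "x powr (1/3) / ln x powr (1/3) \<le> real q"
  unfolding par_q_def by (rule real_nat_ceiling_ge)
lemma p_le: "real p \<le> pb x"
proof -
  have "0 \<le> x powr (1/6) / ln x powr (1/6)" using lnpos by simp
  then show ?thesis unfolding par_p_def pb_def by simp
qed
lemma q_le: "real q \<le> qb x"
proof -
  have "0 \<le> x powr (1/3) / ln x powr (1/3)" using lnpos by simp
  then show ?thesis unfolding par_q_def qb_def by simp
qed
lemma p1: "1 \<le> p"
proof -
  have "0 < x powr (1/6) / ln x powr (1/6)" using lnpos x1 by (intro divide_pos_pos) auto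
  then have "0 < real p" using p_ge by linarith
  then show ?thesis by simp
qed
lemma q1: "1 \<le> q"
proof -
  have "0 < x powr (1/3) / ln x powr (1/3)" using lnpos x1 by (intro divide_pos_pos) auto
  then have "0 < real q" using q_ge by linarith
  then show ?thesis by simp
qed

lemma dp_le: assumes "d \<le> D" shows "real d / real p \<le> mu1 x"
proof -
  have pp: "0 < x powr (1/6) / ln x powr (1/6)" using lnpos x1 by simp
  have "real d / real p \<le> x / real p" using assms p1 by (simp add: divide_right_mono)
  also have "\<dots> \<le> x / (x powr (1/6) / ln x powr (1/6))"
    using p_ge pp x1 p1 by (intro divide_left_mono mult_pos_pos) auto
  also have "\<dots> = mu1 x" by (rule id_mu1[OF x1])
  finally show ?thesis .
qed

lemma dq_le: assumes "d \<le> D" shows "real d / real q \<le> mu0 x"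
proof -
  have pp: "0 < x powr (1/3) / ln x powr (1/3)" using lnpos x1 by simp
  have "real d / real q \<le> x / real q" using assms q1 by (simp add: divide_right_mono)
  also have "\<dots> \<le> x / (x powr (1/3) / ln x powr (1/3))"
    using q_ge pp x1 q1 by (intro divide_left_mono mult_pos_pos) auto
  also have "\<dots> = mu0 x" by (rule id_mu0[OF x1])
  finally show ?thesis .
qed

lemma mu0_pos: "0 < mu0 x" using x1 lnpos by (simp add: mu0_def)
lemma mu1_pos: "0 < mu1 x" using x1 lnpos by (simp add: mu1_def)
lemma t2_pos: "0 < t2 x" using x1 lnpos by (simp add: t2_def)
lemma t3_pos: "0 < t3 x" using x1 mu0_pos by (simp add: t3_def)
lemma t4_pos: "0 < t4 x" using x1 lnpos by (simp add: t4_def)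

lemma B_gt: "mu0 x < real (par_B D)"
proof -
  have "mu0 x \<le> real (nat \<lceil>x powr (2/3) * ln x powr (1/3)\<rceil>)"
    unfolding mu0_def by (rule real_nat_ceiling_ge)
  moreover have "0 < real (nat \<lceil>x powr (1/3) * ln x powr (2/3)\<rceil>)"
  proof -
    have "0 < x powr (1/3) * ln x powr (2/3)" using x1 lnpos by simp
    then show ?thesis by linarith
  qed
  ultimately show ?thesis unfolding par_B_def by (simp only: of_nat_add of_nat_mult of_nat_numeral)
qed

lemma L_le: "x \<le> x powr (5/3) * ln x powr (1/3) / 3" using bigD by (simp add: big_def)

end

context setting begin

definition EE where "EE = {{u,v} | u v. E u v}"
definition XX :: "('a + 'a set) set" where "XX = Inl ` V \<union> Inr ` EE"
definition CC :: "('a + 'a set) \<Rightarrow> (nat \<times> nat) set" where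
  "CC z = (case z of Inl _ \<Rightarrow> {1..p} \<times> {3..2*p+q} | Inr _ \<Rightarrow> {1..q} \<times> {1..2})"
abbreviation "\<Omega> \<equiv> PiE XX CC"

lemma finEE: "finite EE"
proof -
  have "EE \<subseteq> (\<lambda>(u,v). {u,v}) ` (V \<times> V)" using Eprops by (auto simp: EE_def)
  then show ?thesis using finV finite_subset by blast
qed
lemma finXX: "finite XX" using finV finEE by (simp add: XX_def)
lemma finCC: "\<forall>z\<in>XX. finite (CC z)" by (auto simp: CC_def split: sum.splits)
lemma neCC: "\<forall>z\<in>XX. CC z \<noteq> {}" using p1 q1 by (auto simp: CC_def split: sum.splits)
lemma finO: "finite \<Omega>" using finite_PiE'[OF finXX finCC] .
lemma cardO: "0 < card \<Omega>" using card_PiE_pos[OF finXX finCC neCC] .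
lemma neO: "\<Omega> \<noteq> {}" using cardO by auto

lemma edge_in: "u \<in> NB v \<Longrightarrow> {u,v} \<in> EE"
  using nb_E by (auto simp: EE_def)

lemma coords: "\<forall>u\<in>NB v. Inl u \<in> XX \<and> Inr {u,v} \<in> XX \<and> Inl u \<noteq> Inr {u,v}"
  using nb_E edge_in by (auto simp: XX_def)

lemma dis: "\<forall>u\<in>NB v. \<forall>w\<in>NB v. u \<noteq> w \<longrightarrow> Inl u \<noteq> Inl w \<and> Inr {u,v} \<noteq> Inr {w,v} \<and> Inl u \<noteq> (Inr {w,v} :: 'a + 'a set)"
  using nb_E by (auto simp: doubleton_eq_iff)

lemma CC_simps [simp]: "CC (Inl u) = {1..p} \<times> {3..2*p+q}" "CC (Inr e) = {1..q} \<times> {1..2}"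
  by (auto simp: CC_def)

lemma up_v:
  fixes Q :: "'a \<Rightarrow> nat \<times> nat \<Rightarrow> nat \<times> nat \<Rightarrow> bool"
  assumes "(\<Sum>u\<in>NB v. pr ({1..p} \<times> {3..2*p+q}) ({1..q} \<times> {1..2}) (Q u)) \<le> M" "0 \<le> M" "0 < t"
  shows "real (card {f\<in>\<Omega>. M + t \<le> real (card {u\<in>NB v. Q u (f (Inl u)) (f (Inr {u,v}))})})
         \<le> exp (- (t^2) / (2 * (M + t))) * real (card \<Omega>)"
  using upper_tail[OF finXX finCC neCC fin_nb coords dis, where Q=Q and M=M and t=t] assms by simp

lemma low_v:
  fixes Q :: "'a \<Rightarrow> nat \<times> nat \<Rightarrow> nat \<times> nat \<Rightarrow> bool"
  assumes "(\<Sum>u\<in>NB v. pr ({1..p} \<times> {3..2*p+q}) ({1..q} \<times> {1..2}) (Q u)) = m" "0 < t" "t < m"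
  shows "real (card {f\<in>\<Omega>. real (card {u\<in>NB v. Q u (f (Inl u)) (f (Inr {u,v}))}) \<le> m - t})
         \<le> exp (- (t^2) / (2 * m)) * real (card \<Omega>)"
  using lower_tail[OF finXX finCC neCC fin_nb coords dis, where Q=Q and m=m and t=t] assms by simp

lemma f_Inl: "f \<in> \<Omega> \<Longrightarrow> v \<in> V \<Longrightarrow> f (Inl v) \<in> {1..p} \<times> {3..2*p+q}"
  using PiE_mem[of f XX CC "Inl v"] by (auto simp: XX_def)
lemma f_Inr: "f \<in> \<Omega> \<Longrightarrow> e \<in> EE \<Longrightarrow> f (Inr e) \<in> {1..q} \<times> {1..2}"
  using PiE_mem[of f XX CC "Inr e"] by (auto simp: XX_def)

end

context setting begin

definition cI where "cI v s \<longleftrightarrow> (real (deg V E v) \<ge> real D / 3 \<longrightarrow>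
   (\<forall>k\<in>{1..par_p D}. \<bar>real (card {u \<in> nbrs V E v. fst (s u) = k}) - real (deg V E v) / real (par_p D)\<bar> \<le> sqrt (real D)))"
definition cII where "cII v r \<longleftrightarrow> (real (deg V E v) \<ge> real D / 3 \<longrightarrow>
   (\<forall>k\<in>{1..par_q D}. \<bar>real (card {u \<in> nbrs V E v. fst (r u) = k}) - real (deg V E v) / real (par_q D)\<bar>
      \<le> 3 * real D powr (1/3) * ln (real D) powr (2/3)))"
definition cIII where "cIII v a s r \<longleftrightarrow>
   real (card {u \<in> nbrs V E v. val a (s u) (r u) = fst (s u) + fst a + fst (r u)})
     \<ge> real (deg V E v) - (3 + real D powr (-1/6)) * real D powr (2/3) * ln (real D) powr (1/3)"
definition cIV where "cIV v a s r \<longleftrightarrow>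
   (\<forall>k\<in>{1..2 * par_p D + par_q D}. real (card {u \<in> nbrs V E v. val a (s u) (r u) = k})
      \<le> real D powr (2/3) * ln (real D) powr (1/3) + 5 * real D powr (1/3) * ln (real D) powr (2/3))"
definition cVI where "cVI v s \<longleftrightarrow> (real (deg V E v) \<ge> real D / 3 \<longrightarrow>
   (\<forall>\<alpha>::nat. \<alpha> > 0 \<longrightarrow>
      real (card {u \<in> nbrs V E v. real (deg V E u) \<ge> real D / 3 \<and>
         real (par_B D * deg V E u * fst (s u)) + R (deg V E u) D \<in> I_int D \<alpha>})
      \<le> real D powr (5/6) * ln (real D) powr (1/6) + sqrt (real D)))"

lemma tail_pow:
  assumes a: "K * ln x \<le> t^2 / (2 * (M + t))"
  shows "exp (- (t^2) / (2 * (M + t))) \<le> x powr (- K)"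
proof -
  have e: "exp (- (t^2) / (2 * (M + t))) = exp (- (t^2 / (2 * (M + t))))" by simp
  show ?thesis unfolding e by (rule exp_to_powr[OF a]) (use x1 in simp)
qed

lemma e1: "exp (- ((sqrt x)^2) / (2 * (mu1 x + sqrt x))) \<le> x powr (-10)"
  by (rule tail_pow) (use bigD in \<open>unfold big_def, blast\<close>)
lemma e2: "exp (- ((t2 x)^2) / (2 * (mu0 x + t2 x))) \<le> x powr (-4)"
  by (rule tail_pow) (use bigD in \<open>unfold big_def, blast\<close>)
lemma e3: "exp (- ((t3 x)^2) / (2 * (3 * mu0 x + t3 x))) \<le> x powr (-10)"
  by (rule tail_pow) (use bigD in \<open>unfold big_def, blast\<close>)
lemma e4: "exp (- ((t4 x)^2) / (2 * (mu0 x + t4 x))) \<le> x powr (-10)"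
  by (rule tail_pow) (use bigD in \<open>unfold big_def, blast\<close>)

lemma bound_I:
  assumes v: "v \<in> V"
  shows "real (card {f\<in>\<Omega>. \<not> cI v (\<lambda>u. f (Inl u))}) \<le> real p * (2 * x powr (-10) * real (card \<Omega>))"
proof (cases "real (deg V E v) \<ge> x / 3")
  case False
  then have e: "{f\<in>\<Omega>. \<not> cI v (\<lambda>u. f (Inl u))} = {}" by (auto simp: cI_def)
  show ?thesis unfolding e by simp
next
  case True
  define m where "m = real (deg V E v) / real p"
  have dD: "deg V E v \<le> D" using deg_le v .
  have mle: "m \<le> mu1 x" unfolding m_def using dp_le[OF dD] .
  have sx: "0 < sqrt x" using x1 by simp
  have mgt: "sqrt x < m"
  proof -
    have "sqrt x < (x/3) / pb x" using bigD by (simp add: big_def)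
    also have "\<dots> \<le> (x/3) / real p" using p_le p1 x1 by (intro divide_left_mono) auto
    also have "\<dots> \<le> m" unfolding m_def using True p1 by (intro divide_right_mono) auto
    finally show ?thesis .
  qed
  have m0: "0 \<le> m" using mgt sx by linarith
  let ?c = "\<lambda>k f. real (card {u\<in>NB v. fst (f (Inl u)) = k})"
  let ?A = "\<lambda>k. {f\<in>\<Omega>. m + sqrt x \<le> ?c k f} \<union> {f\<in>\<Omega>. ?c k f \<le> m - sqrt x}"
  have each: "real (card (?A k)) \<le> 2 * x powr (-10) * real (card \<Omega>)" if k: "k \<in> {1..p}" for k
  proof -
    have s: "(\<Sum>u\<in>NB v. pr ({1..p} \<times> {3..2*p+q}) ({1..q} \<times> {1..2}) ((\<lambda>u s r. fst s = k) u)) = m"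
      using pr_I[OF p1 q1 refl k] by (simp add: card_nb m_def)
    have u: "real (card {f\<in>\<Omega>. m + sqrt x \<le> ?c k f}) \<le> x powr (-10) * real (card \<Omega>)"
    proof -
      have "real (card {f\<in>\<Omega>. m + sqrt x \<le> ?c k f}) \<le> exp (- ((sqrt x)^2) / (2 * (m + sqrt x))) * real (card \<Omega>)"
        using up_v[where v=v and Q="\<lambda>u s r. fst s = k" and M=m and t="sqrt x"] s m0 sx by simp
      also have "\<dots> \<le> exp (- ((sqrt x)^2) / (2 * (mu1 x + sqrt x))) * real (card \<Omega>)"
        using exp_mono_M[OF m0 mle sx] by (intro mult_right_mono) auto
      also have "\<dots> \<le> x powr (-10) * real (card \<Omega>)" using e1 by (intro mult_right_mono) auto
      finally show ?thesis .
    qed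
    have l: "real (card {f\<in>\<Omega>. ?c k f \<le> m - sqrt x}) \<le> x powr (-10) * real (card \<Omega>)"
    proof -
      have "real (card {f\<in>\<Omega>. ?c k f \<le> m - sqrt x}) \<le> exp (- ((sqrt x)^2) / (2 * m)) * real (card \<Omega>)"
        using low_v[where v=v and Q="\<lambda>u s r. fst s = k" and m=m and t="sqrt x"] s mgt sx by simp
      also have "\<dots> \<le> exp (- ((sqrt x)^2) / (2 * (mu1 x + sqrt x))) * real (card \<Omega>)"
        using exp_mono_low[of m "mu1 x" "sqrt x"] mle mgt sx by (intro mult_right_mono) auto
      also have "\<dots> \<le> x powr (-10) * real (card \<Omega>)" using e1 by (intro mult_right_mono) auto
      finally show ?thesis .
    qed
    have "card (?A k) \<le> card {f\<in>\<Omega>. m + sqrt x \<le> ?c k f} + card {f\<in>\<Omega>. ?c k f \<le> m - sqrt x}"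
      by (rule card_Un_le)
    then have "real (card (?A k)) \<le> real (card {f\<in>\<Omega>. m + sqrt x \<le> ?c k f}) + real (card {f\<in>\<Omega>. ?c k f \<le> m - sqrt x})"
      by linarith
    then show ?thesis using u l by linarith
  qed
  have sub: "{f\<in>\<Omega>. \<not> cI v (\<lambda>u. f (Inl u))} \<subseteq> (\<Union>k\<in>{1..p}. ?A k)"
  proof
    fix f assume f: "f \<in> {f\<in>\<Omega>. \<not> cI v (\<lambda>u. f (Inl u))}"
    then obtain k where k: "k \<in> {1..p}" and nk: "\<not> \<bar>?c k f - m\<bar> \<le> sqrt x"
      using True unfolding cI_def m_def by auto
    then have "m + sqrt x \<le> ?c k f \<or> ?c k f \<le> m - sqrt x" by linarith
    then have "f \<in> ?A k" using f by blast
    then show "f \<in> (\<Union>k\<in>{1..p}. ?A k)" using k by blast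
  qed
  have "real (card {f\<in>\<Omega>. \<not> cI v (\<lambda>u. f (Inl u))}) \<le> real (card {1..p}) * (2 * x powr (-10) * real (card \<Omega>))"
    by (rule card_union_bound[OF _ _ _ sub]) (use each finO in auto)
  then show ?thesis by simp
qed

end

lemma card_filter_compl:
  assumes "finite N"
  shows "card {u\<in>N. \<not> P u} = card N - card {u\<in>N. P u}"
proof -
  have "N = {u\<in>N. P u} \<union> {u\<in>N. \<not> P u}" by auto
  then have "card N = card {u\<in>N. P u} + card {u\<in>N. \<not> P u}"
    using assms by (metis (no_types, lifting) card_Un_disjoint disjoint_iff finite_Un mem_Collect_eq)
  then show ?thesis by simp
qed

context setting begin

lemma bound_II:
  assumes v: "v \<in> V"
  shows "real (card {f\<in>\<Omega>. \<not> cII v (\<lambda>u. f (Inr {u,v}))}) \<le> real q * (2 * x powr (-4) * real (card \<Omega>))"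
proof (cases "real (deg V E v) \<ge> x / 3")
  case False
  then have e: "{f\<in>\<Omega>. \<not> cII v (\<lambda>u. f (Inr {u,v}))} = {}" by (auto simp: cII_def)
  show ?thesis unfolding e by simp
next
  case True
  define m where "m = real (deg V E v) / real q"
  have dD: "deg V E v \<le> D" using deg_le v .
  have mle: "m \<le> mu0 x" unfolding m_def using dq_le[OF dD] .
  have sx: "0 < t2 x" using t2_pos .
  have mgt: "t2 x < m"
  proof -
    have "t2 x < (x/3) / qb x" using bigD by (simp add: big_def)
    also have "\<dots> \<le> (x/3) / real q" using q_le q1 x1 by (intro divide_left_mono) auto
    also have "\<dots> \<le> m" unfolding m_def using True q1 by (intro divide_right_mono) auto
    finally show ?thesis .
  qed
  have m0: "0 \<le> m" using mgt sx by linarith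
  let ?c = "\<lambda>k f. real (card {u\<in>NB v. fst (f (Inr {u,v})) = k})"
  let ?A = "\<lambda>k. {f\<in>\<Omega>. m + t2 x \<le> ?c k f} \<union> {f\<in>\<Omega>. ?c k f \<le> m - t2 x}"
  have each: "real (card (?A k)) \<le> 2 * x powr (-4) * real (card \<Omega>)" if k: "k \<in> {1..q}" for k
  proof -
    have s: "(\<Sum>u\<in>NB v. pr ({1..p} \<times> {3..2*p+q}) ({1..q} \<times> {1..2}) ((\<lambda>u s r. fst r = k) u)) = m"
      using pr_II[OF p1 q1 refl k] by (simp add: card_nb m_def)
    have u: "real (card {f\<in>\<Omega>. m + t2 x \<le> ?c k f}) \<le> x powr (-4) * real (card \<Omega>)"
    proof -
      have "real (card {f\<in>\<Omega>. m + t2 x \<le> ?c k f}) \<le> exp (- ((t2 x)^2) / (2 * (m + t2 x))) * real (card \<Omega>)"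
        using up_v[where v=v and Q="\<lambda>u s r. fst r = k" and M=m and t="t2 x"] s m0 sx by simp
      also have "\<dots> \<le> exp (- ((t2 x)^2) / (2 * (mu0 x + t2 x))) * real (card \<Omega>)"
        using exp_mono_M[OF m0 mle sx] by (intro mult_right_mono) auto
      also have "\<dots> \<le> x powr (-4) * real (card \<Omega>)" using e2 by (intro mult_right_mono) auto
      finally show ?thesis .
    qed
    have l: "real (card {f\<in>\<Omega>. ?c k f \<le> m - t2 x}) \<le> x powr (-4) * real (card \<Omega>)"
    proof -
      have "real (card {f\<in>\<Omega>. ?c k f \<le> m - t2 x}) \<le> exp (- ((t2 x)^2) / (2 * m)) * real (card \<Omega>)"
        using low_v[where v=v and Q="\<lambda>u s r. fst r = k" and m=m and t="t2 x"] s mgt sx by simp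
      also have "\<dots> \<le> exp (- ((t2 x)^2) / (2 * (mu0 x + t2 x))) * real (card \<Omega>)"
        using exp_mono_low[of m "mu0 x" "t2 x"] mle mgt sx by (intro mult_right_mono) auto
      also have "\<dots> \<le> x powr (-4) * real (card \<Omega>)" using e2 by (intro mult_right_mono) auto
      finally show ?thesis .
    qed
    have "card (?A k) \<le> card {f\<in>\<Omega>. m + t2 x \<le> ?c k f} + card {f\<in>\<Omega>. ?c k f \<le> m - t2 x}"
      by (rule card_Un_le)
    then have "real (card (?A k)) \<le> real (card {f\<in>\<Omega>. m + t2 x \<le> ?c k f}) + real (card {f\<in>\<Omega>. ?c k f \<le> m - t2 x})"
      by linarith
    then show ?thesis using u l by linarith
  qed
  have sub: "{f\<in>\<Omega>. \<not> cII v (\<lambda>u. f (Inr {u,v}))} \<subseteq> (\<Union>k\<in>{1..q}. ?A k)"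
  proof
    fix f assume f: "f \<in> {f\<in>\<Omega>. \<not> cII v (\<lambda>u. f (Inr {u,v}))}"
    have t2e: "3 * x powr (1/3) * ln x powr (2/3) = t2 x" by (simp add: t2_def)
    obtain k where k: "k \<in> {1..q}" and nk: "\<not> \<bar>?c k f - m\<bar> \<le> t2 x"
      using f True unfolding cII_def m_def t2e by auto
    then have "m + t2 x \<le> ?c k f \<or> ?c k f \<le> m - t2 x" by linarith
    then have "f \<in> ?A k" using f by blast
    then show "f \<in> (\<Union>k\<in>{1..q}. ?A k)" using k by blast
  qed
  have "real (card {f\<in>\<Omega>. \<not> cII v (\<lambda>u. f (Inr {u,v}))}) \<le> real (card {1..q}) * (2 * x powr (-4) * real (card \<Omega>))"
    by (rule card_union_bound[OF _ _ _ sub]) (use each finO in auto)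
  then show ?thesis by simp
qed

lemma bound_III:
  assumes v: "v \<in> V"
  shows "real (card {f\<in>\<Omega>. \<not> cIII v (f (Inl v)) (\<lambda>u. f (Inl u)) (\<lambda>u. f (Inr {u,v}))})
         \<le> real (p * W) * (x powr (-10) * real (card \<Omega>))"
proof -
  let ?Cv = "{1..p} \<times> {3..2*p+q}"
  let ?c = "\<lambda>a f. real (card {u\<in>NB v. viol a (f (Inl u)) (f (Inr {u,v}))})"
  let ?A = "\<lambda>a. {f\<in>\<Omega>. 3 * mu0 x + t3 x \<le> ?c a f}"
  have dD: "deg V E v \<le> D" using deg_le v .
  have each: "real (card (?A a)) \<le> x powr (-10) * real (card \<Omega>)" if a: "a \<in> ?Cv" for a
  proof -
    have s: "(\<Sum>u\<in>NB v. pr ?Cv ({1..q} \<times> {1..2}) ((\<lambda>u. viol a) u)) \<le> 3 * mu0 x"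
    proof -
      have "(\<Sum>u\<in>NB v. pr ?Cv ({1..q} \<times> {1..2}) ((\<lambda>u. viol a) u)) \<le> (\<Sum>u\<in>NB v. 3 / real q)"
        using pr_III[OF p1 q1 refl a] by (intro sum_mono) auto
      also have "\<dots> = 3 * (real (deg V E v) / real q)" by (simp add: card_nb)
      also have "\<dots> \<le> 3 * mu0 x" using dq_le[OF dD] by simp
      finally show ?thesis .
    qed
    have "real (card (?A a)) \<le> exp (- ((t3 x)^2) / (2 * (3 * mu0 x + t3 x))) * real (card \<Omega>)"
      using up_v[where v=v and Q="\<lambda>u. viol a" and M="3 * mu0 x" and t="t3 x"] s mu0_pos t3_pos by simp
    also have "\<dots> \<le> x powr (-10) * real (card \<Omega>)" using e3 by (intro mult_right_mono) auto
    finally show ?thesis .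
  qed
  have sub: "{f\<in>\<Omega>. \<not> cIII v (f (Inl v)) (\<lambda>u. f (Inl u)) (\<lambda>u. f (Inr {u,v}))} \<subseteq> (\<Union>a\<in>?Cv. ?A a)"
  proof
    fix f assume f: "f \<in> {f\<in>\<Omega>. \<not> cIII v (f (Inl v)) (\<lambda>u. f (Inl u)) (\<lambda>u. f (Inr {u,v}))}"
    let ?a = "f (Inl v)"
    have aC: "?a \<in> ?Cv" using f_Inl f v by auto
    have sub1: "{u\<in>NB v. \<not> viol ?a (f (Inl u)) (f (Inr {u,v}))}
       \<subseteq> {u\<in>NB v. val ?a (f (Inl u)) (f (Inr {u,v})) = fst (f (Inl u)) + fst ?a + fst (f (Inr {u,v}))}"
      using not_viol by blast
    have "card {u\<in>NB v. \<not> viol ?a (f (Inl u)) (f (Inr {u,v}))}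
          \<le> card {u\<in>NB v. val ?a (f (Inl u)) (f (Inr {u,v})) = fst (f (Inl u)) + fst ?a + fst (f (Inr {u,v}))}"
      using fin_nb by (intro card_mono[OF _ sub1]) auto
    moreover have "card {u\<in>NB v. \<not> viol ?a (f (Inl u)) (f (Inr {u,v}))} = deg V E v - card {u\<in>NB v. viol ?a (f (Inl u)) (f (Inr {u,v}))}"
      unfolding card_filter_compl[OF fin_nb] card_nb ..
    moreover have "card {u\<in>NB v. viol ?a (f (Inl u)) (f (Inr {u,v}))} \<le> deg V E v"
      unfolding card_nb[symmetric] using fin_nb by (intro card_mono) auto
    ultimately have ge: "real (card {u\<in>NB v. val ?a (f (Inl u)) (f (Inr {u,v})) = fst (f (Inl u)) + fst ?a + fst (f (Inr {u,v}))})
         \<ge> real (deg V E v) - ?c ?a f" by linarith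
    have eq: "(3 + x powr (-1/6)) * x powr (2/3) * ln x powr (1/3) = 3 * mu0 x + t3 x"
      unfolding mu0_def t3_def by (simp only: distrib_right mult.assoc)
    have fO: "f \<in> \<Omega>" and nc: "\<not> cIII v ?a (\<lambda>u. f (Inl u)) (\<lambda>u. f (Inr {u,v}))"
      using f[THEN CollectD] by (rule conjunct1, rule conjunct2)
    have "3 * mu0 x + t3 x \<le> ?c ?a f" using nc ge unfolding cIII_def eq by linarith
    then have "f \<in> ?A ?a" using fO by (intro CollectI conjI)
    then show "f \<in> (\<Union>a\<in>?Cv. ?A a)" by (rule UN_I[OF aC])
  qed
  have "real (card {f\<in>\<Omega>. \<not> cIII v (f (Inl v)) (\<lambda>u. f (Inl u)) (\<lambda>u. f (Inr {u,v}))}) \<le> real (card ?Cv) * (x powr (-10) * real (card \<Omega>))"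
    by (rule card_union_bound[OF _ _ _ sub]) (use each finO in auto)
  then show ?thesis using cardCv[OF p1 q1 refl] by simp
qed

end

context setting begin

lemma bound_IV:
  assumes v: "v \<in> V"
  shows "real (card {f\<in>\<Omega>. \<not> cIV v (f (Inl v)) (\<lambda>u. f (Inl u)) (\<lambda>u. f (Inr {u,v}))})
         \<le> real (p * W * (2*p+q)) * (x powr (-10) * real (card \<Omega>))"
proof -
  let ?Cv = "{1..p} \<times> {3..2*p+q}"
  let ?K = "?Cv \<times> {1..2*p+q}"
  let ?c = "\<lambda>a k f. real (card {u\<in>NB v. val a (f (Inl u)) (f (Inr {u,v})) = k})"
  let ?A = "\<lambda>ak. {f\<in>\<Omega>. mu0 x + t4 x \<le> ?c (fst ak) (snd ak) f}"
  have dD: "deg V E v \<le> D" using deg_le v .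
  have each: "real (card (?A ak)) \<le> x powr (-10) * real (card \<Omega>)" if ak: "ak \<in> ?K" for ak
  proof -
    obtain a k where e: "ak = (a,k)" by (cases ak)
    have a: "a \<in> ?Cv" using ak e by auto
    have s: "(\<Sum>u\<in>NB v. pr ?Cv ({1..q} \<times> {1..2}) ((\<lambda>u s r. val a s r = k) u)) \<le> mu0 x"
    proof -
      have "(\<Sum>u\<in>NB v. pr ?Cv ({1..q} \<times> {1..2}) ((\<lambda>u s r. val a s r = k) u)) \<le> (\<Sum>u\<in>NB v. 1 / real q)"
        using pr_IV[OF p1 q1 refl a] by (intro sum_mono) auto
      also have "\<dots> = real (deg V E v) / real q" by (simp add: card_nb)
      also have "\<dots> \<le> mu0 x" using dq_le[OF dD] by simp
      finally show ?thesis .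
    qed
    have "real (card (?A ak)) \<le> exp (- ((t4 x)^2) / (2 * (mu0 x + t4 x))) * real (card \<Omega>)"
      using up_v[where v=v and Q="\<lambda>u s r. val a s r = k" and M="mu0 x" and t="t4 x"] s mu0_pos t4_pos e by simp
    also have "\<dots> \<le> x powr (-10) * real (card \<Omega>)" using e4 by (intro mult_right_mono) auto
    finally show ?thesis .
  qed
  have sub: "{f\<in>\<Omega>. \<not> cIV v (f (Inl v)) (\<lambda>u. f (Inl u)) (\<lambda>u. f (Inr {u,v}))} \<subseteq> (\<Union>ak\<in>?K. ?A ak)"
  proof
    fix f assume f: "f \<in> {f\<in>\<Omega>. \<not> cIV v (f (Inl v)) (\<lambda>u. f (Inl u)) (\<lambda>u. f (Inr {u,v}))}"
    let ?a = "f (Inl v)"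
    have aC: "?a \<in> ?Cv" using f_Inl f v by auto
    have eq: "x powr (2/3) * ln x powr (1/3) + 5 * x powr (1/3) * ln x powr (2/3) = mu0 x + t4 x"
      by (simp add: mu0_def t4_def)
    obtain k where k: "k \<in> {1..2*p+q}" "mu0 x + t4 x < ?c ?a k f"
      using f unfolding cIV_def eq by (auto simp: not_le)
    then show "f \<in> (\<Union>ak\<in>?K. ?A ak)" using aC f
      by (intro UN_I[of "(?a, k)"]) auto
  qed
  have "real (card {f\<in>\<Omega>. \<not> cIV v (f (Inl v)) (\<lambda>u. f (Inl u)) (\<lambda>u. f (Inr {u,v}))}) \<le> real (card ?K) * (x powr (-10) * real (card \<Omega>))"
    by (rule card_union_bound[OF _ _ _ sub]) (use each finO in auto)
  then show ?thesis using cardCv[OF p1 q1 refl] by (simp add: card_cartesian_product)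
qed

lemma uniq_VI:
  assumes du: "x / 3 \<le> real du" and c: "real (par_B D * du * c) + Rv \<in> I_int D \<alpha>"
    and c': "real (par_B D * du * c') + Rv \<in> I_int D \<alpha>" and lt: "c < c'"
  shows False
proof -
  let ?L = "x powr (5/3) * ln x powr (1/3) / 3"
  have "real (par_B D * du * c') - real (par_B D * du * c) < ?L"
    using c c' by (auto simp: I_int_def algebra_simps)
  moreover have "real (par_B D * du * c') - real (par_B D * du * c) = real (par_B D) * real du * (real c' - real c)"
    by (simp add: algebra_simps)
  moreover have "real c' - real c \<ge> 1" using lt by simp
  moreover have "real (par_B D) * real du \<ge> real (par_B D) * (x/3)"
    using du by (intro mult_left_mono) auto
  moreover have "real (par_B D) * (x/3) > mu0 x * (x / 3)"
    using B_gt x1 by (intro mult_strict_right_mono) auto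
  moreover have "mu0 x * (x/3) = ?L" using L_eq[OF x1] by simp
  moreover have "real (par_B D) * real du * (real c' - real c) \<ge> real (par_B D) * real du * 1"
    using lt by (intro mult_left_mono) auto
  ultimately show False by linarith
qed

lemma bound_VI:
  assumes v: "v \<in> V"
  shows "real (card {f\<in>\<Omega>. \<not> cVI v (\<lambda>u. f (Inl u))}) \<le> real D * (x powr (-10) * real (card \<Omega>))"
proof -
  let ?Cv = "{1..p} \<times> {3..2*p+q}"
  let ?Q = "\<lambda>\<alpha>::nat. \<lambda>u s (r::nat\<times>nat). real (deg V E u) \<ge> x / 3 \<and>
         real (par_B D * deg V E u * fst s) + R (deg V E u) D \<in> I_int D \<alpha>"
  let ?c = "\<lambda>\<alpha> f. real (card {u\<in>NB v. ?Q \<alpha> u (f (Inl u)) (f (Inr {u,v}))})"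
  let ?A = "\<lambda>\<alpha>. {f\<in>\<Omega>. mu1 x + sqrt x \<le> ?c \<alpha> f}"
  have dD: "deg V E v \<le> D" using deg_le v .
  have each: "real (card (?A \<alpha>)) \<le> x powr (-10) * real (card \<Omega>)" for \<alpha>
  proof -
    have pru: "pr ?Cv ({1..q} \<times> {1..2}) (?Q \<alpha> u) \<le> 1 / real p" for u
    proof -
      have "pr ?Cv ({1..q} \<times> {1..2}) (\<lambda>s r. (\<lambda>c. real (deg V E u) \<ge> x / 3 \<and>
         real (par_B D * deg V E u * c) + R (deg V E u) D \<in> I_int D \<alpha>) (fst s)) \<le> 1 / real p"
      proof (rule pr_VI[OF p1 q1 refl])
        show "\<forall>c c'. (x / 3 \<le> real (deg V E u) \<and> real (par_B D * deg V E u * c) + R (deg V E u) D \<in> I_int D \<alpha>) \<longrightarrow>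
          (x / 3 \<le> real (deg V E u) \<and> real (par_B D * deg V E u * c') + R (deg V E u) D \<in> I_int D \<alpha>) \<longrightarrow> c = c'"
          by (metis linorder_neqE_nat uniq_VI)
      qed
      then show ?thesis by simp
    qed
    have s: "(\<Sum>u\<in>NB v. pr ?Cv ({1..q} \<times> {1..2}) (?Q \<alpha> u)) \<le> mu1 x"
    proof -
      have "(\<Sum>u\<in>NB v. pr ?Cv ({1..q} \<times> {1..2}) (?Q \<alpha> u)) \<le> (\<Sum>u\<in>NB v. 1 / real p)"
        using pru by (intro sum_mono) auto
      also have "\<dots> = real (deg V E v) / real p" by (simp add: card_nb)
      also have "\<dots> \<le> mu1 x" using dp_le[OF dD] by simp
      finally show ?thesis .
    qed
    have sx: "0 < sqrt x" using x1 by simp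
    have "real (card (?A \<alpha>)) \<le> exp (- ((sqrt x)^2) / (2 * (mu1 x + sqrt x))) * real (card \<Omega>)"
      using up_v[where v=v and Q="?Q \<alpha>" and M="mu1 x" and t="sqrt x"] s mu1_pos sx by simp
    also have "\<dots> \<le> x powr (-10) * real (card \<Omega>)" using e1 by (intro mult_right_mono) auto
    finally show ?thesis .
  qed
  have sub: "{f\<in>\<Omega>. \<not> cVI v (\<lambda>u. f (Inl u))} \<subseteq> (\<Union>\<alpha>\<in>{1..D}. ?A \<alpha>)"
  proof
    fix f assume f: "f \<in> {f\<in>\<Omega>. \<not> cVI v (\<lambda>u. f (Inl u))}"
    have eq: "x powr (5/6) * ln x powr (1/6) = mu1 x" by (simp add: mu1_def)
    obtain \<alpha> where \<alpha>: "\<alpha> > 0" "mu1 x + sqrt x < ?c \<alpha> f"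
      using f unfolding cVI_def eq by (auto simp: not_le)
    have "\<alpha> \<le> D"
    proof (rule ccontr)
      assume "\<not> \<alpha> \<le> D"
      then have aD: "x \<le> real \<alpha> - 1" by simp
      have "{u\<in>NB v. ?Q \<alpha> u (f (Inl u)) (f (Inr {u,v}))} = {}"
      proof -
        have False if u: "u \<in> NB v" and Qu: "?Q \<alpha> u (f (Inl u)) (f (Inr {u,v}))" for u
        proof -
          have uV: "u \<in> V" using nb_E u by blast
          have fu: "fst (f (Inl u)) \<in> {1..p}" using f_Inl[of f u] f uV by auto
          have le: "real (par_B D * deg V E u * fst (f (Inl u))) + R (deg V E u) D \<le> x^2"
            using hypS uV fu by blast
          have "x * x \<le> (real \<alpha> - 1) * (x powr (5/3) * ln x powr (1/3) / 3)"
            using aD L_le x1 by (intro mult_mono) auto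
          then have "x^2 \<le> (real \<alpha> - 1) * (x powr (5/3) * ln x powr (1/3) / 3)"
            by (simp add: power2_eq_square)
          then show False using Qu le by (auto simp: I_int_def)
        qed
        then show ?thesis by blast
      qed
      then have "?c \<alpha> f = 0" by (simp only: card.empty of_nat_0)
      moreover have "0 \<le> sqrt x" by simp
      ultimately show False using \<alpha>(2) mu1_pos by linarith
    qed
    then show "f \<in> (\<Union>\<alpha>\<in>{1..D}. ?A \<alpha>)" using \<alpha> f by (intro UN_I[of \<alpha>]) auto
  qed
  have "real (card {f\<in>\<Omega>. \<not> cVI v (\<lambda>u. f (Inl u))}) \<le> real (card {1..D}) * (x powr (-10) * real (card \<Omega>))"
    by (rule card_union_bound[OF _ _ _ sub]) (use each finO in auto)
  then show ?thesis by simp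
qed

end

lemma val_range:
  assumes "a \<in> {1..p} \<times> {3..2*p+q}" "s \<in> {1..p} \<times> {3..2*p+q}" "r \<in> {1..q} \<times> {1..(2::nat)}" "1 \<le> p"
  shows "val a s r \<in> {1..2*p+q}"
  using assms by (auto simp: val_def)

context setting begin

definition bad where "bad v f \<longleftrightarrow> \<not> (cI v (\<lambda>u. f (Inl u)) \<and> cII v (\<lambda>u. f (Inr {u,v})) \<and>
   cIII v (f (Inl v)) (\<lambda>u. f (Inl u)) (\<lambda>u. f (Inr {u,v})) \<and>
   cIV v (f (Inl v)) (\<lambda>u. f (Inl u)) (\<lambda>u. f (Inr {u,v})) \<and> cVI v (\<lambda>u. f (Inl u)))"

lemma Ptot_pos: "0 \<le> Ptot x"
proof -
  have "0 \<le> pb x" "0 \<le> qb x" using x1 lnpos by (auto simp: pb_def qb_def)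
  then show ?thesis unfolding Ptot_def using x1 by simp
qed

lemma bound_bad:
  assumes v: "v \<in> V"
  shows "real (card {f\<in>\<Omega>. bad v f}) \<le> Ptot x * real (card \<Omega>)"
proof -
  let ?S1 = "{f\<in>\<Omega>. \<not> cI v (\<lambda>u. f (Inl u))}"
  let ?S2 = "{f\<in>\<Omega>. \<not> cII v (\<lambda>u. f (Inr {u,v}))}"
  let ?S3 = "{f\<in>\<Omega>. \<not> cIII v (f (Inl v)) (\<lambda>u. f (Inl u)) (\<lambda>u. f (Inr {u,v}))}"
  let ?S4 = "{f\<in>\<Omega>. \<not> cIV v (f (Inl v)) (\<lambda>u. f (Inl u)) (\<lambda>u. f (Inr {u,v}))}"
  let ?S5 = "{f\<in>\<Omega>. \<not> cVI v (\<lambda>u. f (Inl u))}"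
  have sub: "{f\<in>\<Omega>. bad v f} \<subseteq> ?S1 \<union> ?S2 \<union> ?S3 \<union> ?S4 \<union> ?S5" by (auto simp: bad_def)
  have "card {f\<in>\<Omega>. bad v f} \<le> card (?S1 \<union> ?S2 \<union> ?S3 \<union> ?S4 \<union> ?S5)"
    using finO by (intro card_mono[OF _ sub]) auto
  also have "\<dots> \<le> card ?S1 + card ?S2 + card ?S3 + card ?S4 + card ?S5"
    by (meson add_right_mono card_Un_le order_trans)
  finally have c: "real (card {f\<in>\<Omega>. bad v f}) \<le> real (card ?S1) + real (card ?S2) + real (card ?S3) + real (card ?S4) + real (card ?S5)"
    by linarith
  let ?O = "real (card \<Omega>)"
  have O0: "0 \<le> ?O" by simp
  have x10: "0 \<le> x powr (-10)" "0 \<le> x powr (-4)" by auto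
  have pp: "real p \<le> pb x" "real q \<le> qb x" using p_le q_le .
  have w: "real (2*p+q) \<le> 2 * pb x + qb x" using pp by simp
  have pW: "real (p * W) \<le> (2 * pb x + qb x)^2"
  proof -
    have "p * W \<le> (2*p+q) * (2*p+q)" by (intro mult_mono) auto
    then have "real (p * W) \<le> real ((2*p+q) * (2*p+q))" by (simp only: of_nat_le_iff)
    also have "\<dots> = real (2*p+q) ^ 2" by (simp only: of_nat_mult power2_eq_square)
    also have "\<dots> \<le> (2 * pb x + qb x)^2" using w by (intro power_mono) auto
    finally show ?thesis .
  qed
  have pWk: "real (p * W * (2*p+q)) \<le> (2 * pb x + qb x)^3"
  proof -
    have "real (p * W * (2*p+q)) = real (p * W) * real (2*p+q)" by simp
    also have "\<dots> \<le> (2 * pb x + qb x)^2 * (2 * pb x + qb x)"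
      using pW w by (intro mult_mono) auto
    also have "\<dots> = (2 * pb x + qb x)^3" by (simp add: power3_eq_cube power2_eq_square)
    finally show ?thesis .
  qed
  have h1: "real (card ?S1) \<le> pb x * (2 * x powr (-10) * ?O)"
    using bound_I[OF v] mult_right_mono[OF p_le, of "2 * x powr (-10) * ?O"] by simp
  have h2: "real (card ?S2) \<le> qb x * (2 * x powr (-4) * ?O)"
    using bound_II[OF v] mult_right_mono[OF q_le, of "2 * x powr (-4) * ?O"] by simp
  have h3: "real (card ?S3) \<le> (2 * pb x + qb x)^2 * (x powr (-10) * ?O)"
    using bound_III[OF v] mult_right_mono[OF pW, of "x powr (-10) * ?O"] by simp
  have h4: "real (card ?S4) \<le> (2 * pb x + qb x)^3 * (x powr (-10) * ?O)"
    using bound_IV[OF v] mult_right_mono[OF pWk, of "x powr (-10) * ?O"] by simp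
  have h5: "real (card ?S5) \<le> x * (x powr (-10) * ?O)"
    using bound_VI[OF v] by simp
  have idt: "Ptot x * ?O = pb x * (2 * x powr (-10) * ?O) + qb x * (2 * x powr (-4) * ?O)
       + (2 * pb x + qb x)^2 * (x powr (-10) * ?O) + (2 * pb x + qb x)^3 * (x powr (-10) * ?O)
       + x * (x powr (-10) * ?O)"
    unfolding Ptot_def by algebra
  show ?thesis using c h1 h2 h3 h4 h5 idt by linarith
qed

definition TT where "TT v = insert (Inl v) (Inl ` NB v \<union> (\<lambda>u. Inr {u,v}) ` NB v)"
definition GG where "GG v = {w\<in>V. w \<noteq> v \<and> TT v \<inter> TT w \<noteq> {}}"

lemma TT_sub: "v \<in> V \<Longrightarrow> TT v \<subseteq> XX"
  using coords[of v] nb_E by (auto simp: TT_def XX_def)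

lemma cI_cong: "(\<forall>u\<in>NB v. s u = s' u) \<Longrightarrow> cI v s = cI v s'"
  unfolding cI_def by (simp cong: conj_cong)
lemma cII_cong: "(\<forall>u\<in>NB v. s u = s' u) \<Longrightarrow> cII v s = cII v s'"
  unfolding cII_def by (simp cong: conj_cong)
lemma cIII_cong: "(\<forall>u\<in>NB v. s u = s' u \<and> r u = r' u) \<Longrightarrow> cIII v a s r = cIII v a s' r'"
  unfolding cIII_def by (simp cong: conj_cong)
lemma cIV_cong: "(\<forall>u\<in>NB v. s u = s' u \<and> r u = r' u) \<Longrightarrow> cIV v a s r = cIV v a s' r'"
  unfolding cIV_def by (simp cong: conj_cong)
lemma cVI_cong: "(\<forall>u\<in>NB v. s u = s' u) \<Longrightarrow> cVI v s = cVI v s'"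
  unfolding cVI_def by (simp cong: conj_cong)

lemma dep_bad: "dep (TT v) (bad v)"
  unfolding dep_def
proof (intro allI impI)
  fix f g :: "'a + 'a set \<Rightarrow> nat \<times> nat"
  assume a: "\<forall>z\<in>TT v. f z = g z"
  have 1: "f (Inl v) = g (Inl v)" using a by (auto simp: TT_def)
  have 2: "\<forall>u\<in>NB v. f (Inl u) = g (Inl u) \<and> f (Inr {u,v}) = g (Inr {u,v})" using a by (auto simp: TT_def)
  show "bad v f = bad v g"
    unfolding bad_def 1
    using cI_cong[of v "\<lambda>u. f (Inl u)" "\<lambda>u. g (Inl u)"] cII_cong[of v "\<lambda>u. f (Inr {u,v})" "\<lambda>u. g (Inr {u,v})"]
      cIII_cong[of v "\<lambda>u. f (Inl u)" "\<lambda>u. g (Inl u)" "\<lambda>u. f (Inr {u,v})" "\<lambda>u. g (Inr {u,v})" "g (Inl v)"]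
      cIV_cong[of v "\<lambda>u. f (Inl u)" "\<lambda>u. g (Inl u)" "\<lambda>u. f (Inr {u,v})" "\<lambda>u. g (Inr {u,v})" "g (Inl v)"]
      cVI_cong[of v "\<lambda>u. f (Inl u)" "\<lambda>u. g (Inl u)"] 2
    by simp
qed

lemma GG_sub: "GG v \<subseteq> NB v \<union> (\<Union>u\<in>NB v. NB u)"
proof
  fix w assume w: "w \<in> GG v"
  then have wV: "w \<in> V" and wv: "w \<noteq> v" and ne: "TT v \<inter> TT w \<noteq> {}" by (auto simp: GG_def)
  then obtain z where z: "z \<in> TT v" "z \<in> TT w" by blast
  show "w \<in> NB v \<union> (\<Union>u\<in>NB v. NB u)"
  proof (cases z)
    case (Inl y)
    then have y1: "y = v \<or> y \<in> NB v" and y2: "y = w \<or> y \<in> NB w" using z by (auto simp: TT_def)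
    show ?thesis
    proof (cases "y = v")
      case True
      then have "v \<in> NB w" using y2 wv by auto
      then show ?thesis using nb_sym by blast
    next
      case False
      then have yv: "y \<in> NB v" using y1 by auto
      show ?thesis
      proof (cases "y = w")
        case True then show ?thesis using yv by auto
      next
        case False
        then have "y \<in> NB w" using y2 by auto
        then have "w \<in> NB y" using nb_sym by blast
        then show ?thesis using yv by blast
      qed
    qed
  next
    case (Inr e)
    then obtain u u' where "u \<in> NB v" "e = {u,v}" "u' \<in> NB w" "e = {u',w}" using z by (auto simp: TT_def)
    then have "w = u" using wv by (auto simp: doubleton_eq_iff)
    then show ?thesis using \<open>u \<in> NB v\<close> by blast
  qed
qed

lemma GG_card: "v \<in> V \<Longrightarrow> card (GG v \<inter> V) \<le> D + D * D"
proof -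
  assume v: "v \<in> V"
  have fin: "finite (\<Union>u\<in>NB v. NB u)" using fin_nb by blast
  have "card (GG v \<inter> V) \<le> card (NB v \<union> (\<Union>u\<in>NB v. NB u))"
    using GG_sub fin fin_nb by (intro card_mono) auto
  also have "\<dots> \<le> card (NB v) + card (\<Union>u\<in>NB v. NB u)" by (rule card_Un_le)
  also have "\<dots> \<le> card (NB v) + (\<Sum>u\<in>NB v. card (NB u))"
    using card_UN_le[OF fin_nb] by simp
  also have "\<dots> \<le> D + (\<Sum>u\<in>NB v. D)"
  proof (intro add_mono sum_mono)
    show "card (NB v) \<le> D" using deg_le v card_nb by simp
    fix u assume "u \<in> NB v"
    then show "card (NB u) \<le> D" using deg_le nb_E card_nb by metis
  qed
  also have "\<dots> \<le> D + D * D" using deg_le[OF v] card_nb by (simp add: mult_right_mono)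
  finally show ?thesis .
qed

lemma exists_f: "\<exists>f\<in>\<Omega>. \<forall>v\<in>V. \<not> bad v f"
proof (rule LLL[OF finO neO finV _ _ _ Ptot_pos])
  show "1 \<le> D + D * D" using x3 by (cases D) auto
  show "\<forall>i\<in>V. card (GG i \<inter> V) \<le> D + D * D" using GG_card by blast
  show "4 * real (D + D * D) * Ptot x \<le> 1" using bigD by (simp add: big_def power2_eq_square)
  show "\<forall>i\<in>V. \<forall>S. S \<subseteq> V - GG i - {i} \<longrightarrow>
        real (card {\<omega>\<in>\<Omega>. bad i \<omega> \<and> (\<forall>j\<in>S. \<not> bad j \<omega>)}) \<le> Ptot x * real (card {\<omega>\<in>\<Omega>. \<forall>j\<in>S. \<not> bad j \<omega>})"
  proof (intro ballI allI impI)
    fix v S assume v: "v \<in> V" and S: "S \<subseteq> V - GG v - {v}"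
    let ?g = "\<lambda>f. if bad v f then 1 else (0::real)"
    let ?h = "\<lambda>f. if (\<forall>j\<in>S. \<not> bad j f) then 1 else (0::real)"
    have T: "TT v \<subseteq> XX" using TT_sub v .
    have U: "(\<Union>w\<in>S. TT w) \<subseteq> XX" using TT_sub S by blast
    have TU: "TT v \<inter> (\<Union>w\<in>S. TT w) = {}" using S by (auto simp: GG_def)
    have dg: "dep (TT v) ?g"
      unfolding dep_def
    proof (intro allI impI)
      fix f g :: "'a + 'a set \<Rightarrow> nat \<times> nat"
      assume "\<forall>z\<in>TT v. f z = g z"
      then have "bad v f = bad v g" using dep_bad[of v] unfolding dep_def by blast
      then show "?g f = ?g g" by simp
    qed
    have dh: "dep (\<Union>w\<in>S. TT w) ?h"
      unfolding dep_def
    proof (intro allI impI)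
      fix f g :: "'a + 'a set \<Rightarrow> nat \<times> nat"
      assume a: "\<forall>z\<in>(\<Union>w\<in>S. TT w). f z = g z"
      have "\<forall>j\<in>S. bad j f = bad j g"
        using a dep_bad unfolding dep_def by blast
      then show "?h f = ?h g" by simp
    qed
    have eq: "real (card \<Omega>) * (\<Sum>f\<in>\<Omega>. ?g f * ?h f) = (\<Sum>f\<in>\<Omega>. ?g f) * (\<Sum>f\<in>\<Omega>. ?h f)"
      by (rule sum_indep[OF T U TU dg dh])
    have s1: "(\<Sum>f\<in>\<Omega>. ?g f * ?h f) = real (card {\<omega>\<in>\<Omega>. bad v \<omega> \<and> (\<forall>j\<in>S. \<not> bad j \<omega>)})"
    proof -
      have "(\<Sum>f\<in>\<Omega>. ?g f * ?h f) = (\<Sum>f\<in>\<Omega>. if bad v f \<and> (\<forall>j\<in>S. \<not> bad j f) then 1 else 0)"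
        by (intro sum.cong) auto
      also have "\<dots> = real (card {\<omega>\<in>\<Omega>. bad v \<omega> \<and> (\<forall>j\<in>S. \<not> bad j \<omega>)})"
        by (rule sum_ind_card[OF finO])
      finally show ?thesis .
    qed
    have s2: "(\<Sum>f\<in>\<Omega>. ?g f) = real (card {\<omega>\<in>\<Omega>. bad v \<omega>})"
      by (rule sum_ind_card[OF finO])
    have s3: "(\<Sum>f\<in>\<Omega>. ?h f) = real (card {\<omega>\<in>\<Omega>. \<forall>j\<in>S. \<not> bad j \<omega>})"
      by (rule sum_ind_card[OF finO])
    have "real (card \<Omega>) * real (card {\<omega>\<in>\<Omega>. bad v \<omega> \<and> (\<forall>j\<in>S. \<not> bad j \<omega>)})
        = real (card {\<omega>\<in>\<Omega>. bad v \<omega>}) * real (card {\<omega>\<in>\<Omega>. \<forall>j\<in>S. \<not> bad j \<omega>})"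
      using eq s1 s2 s3 by simp
    also have "\<dots> \<le> (Ptot x * real (card \<Omega>)) * real (card {\<omega>\<in>\<Omega>. \<forall>j\<in>S. \<not> bad j \<omega>})"
      using bound_bad[OF v] by (intro mult_right_mono) auto
    finally show "real (card {\<omega>\<in>\<Omega>. bad v \<omega> \<and> (\<forall>j\<in>S. \<not> bad j \<omega>)}) \<le> Ptot x * real (card {\<omega>\<in>\<Omega>. \<forall>j\<in>S. \<not> bad j \<omega>})"
      using cardO by (simp add: algebra_simps)
  qed
qed

lemma final:
  "(\<exists>(c1 :: 'a \<Rightarrow> nat) (c2 :: 'a set \<Rightarrow> nat) (c3v :: 'a \<Rightarrow> nat) (c3e :: 'a set \<Rightarrow> nat).
        (\<forall>v\<in>V. c1 v \<in> {1..par_p D}) \<and>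
        (\<forall>u\<in>V. \<forall>v\<in>V. E u v \<longrightarrow> c2 {u, v} \<in> {1..par_q D}) \<and>
        (\<forall>v\<in>V. c3v v \<in> {1..2 * par_p D + par_q D}) \<and>
        (\<forall>u\<in>V. \<forall>v\<in>V. E u v \<longrightarrow> c3e {u, v} \<in> {1..2 * par_p D + par_q D}) \<and>
        (\<forall>v\<in>V.
          (real (deg V E v) \<ge> real D / 3 \<longrightarrow>
             (\<forall>k\<in>{1..par_p D}.
                \<bar>real (card {u \<in> nbrs V E v. c1 u = k}) - real (deg V E v) / real (par_p D)\<bar>
                  \<le> sqrt (real D))) \<and>
          (real (deg V E v) \<ge> real D / 3 \<longrightarrow>
             (\<forall>k\<in>{1..par_q D}.
                \<bar>real (card {u \<in> nbrs V E v. c2 {u, v} = k}) - real (deg V E v) / real (par_q D)\<bar>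
                  \<le> 3 * real D powr (1/3) * ln (real D) powr (2/3))) \<and>
          real (card {u \<in> nbrs V E v. c3e {u, v} = c1 u + c1 v + c2 {u, v}})
             \<ge> real (deg V E v) - (3 + real D powr (-1/6)) * real D powr (2/3) * ln (real D) powr (1/3) \<and>
          (\<forall>k\<in>{1..2 * par_p D + par_q D}.
             real (card {u \<in> nbrs V E v. c3e {u, v} = k})
               \<le> real D powr (2/3) * ln (real D) powr (1/3)
                 + 5 * real D powr (1/3) * ln (real D) powr (2/3)) \<and>
          (\<forall>u\<in>nbrs V E v. c3v u = c3v v \<longrightarrow> c3e {u, v} = c3v v) \<and>
          (real (deg V E v) \<ge> real D / 3 \<longrightarrow>
             (\<forall>\<alpha>::nat. \<alpha> > 0 \<longrightarrow>
                real (card {u \<in> nbrs V E v. real (deg V E u) \<ge> real D / 3 \<and>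
                   real (par_B D * deg V E u * c1 u) + R (deg V E u) D \<in> I_int D \<alpha>})
                \<le> real D powr (5/6) * ln (real D) powr (1/6) + sqrt (real D)))))"
proof -
  obtain f where f: "f \<in> \<Omega>" and good: "\<forall>v\<in>V. \<not> bad v f" using exists_f by blast
  define c1 where "c1 v = fst (f (Inl v))" for v
  define c2 where "c2 e = fst (f (Inr e))" for e
  define c3v where "c3v v = snd (f (Inl v))" for v
  define c3e where "c3e e = (SOME k. \<forall>u w. e = {u,w} \<and> u \<noteq> w \<longrightarrow> k = val (f (Inl w)) (f (Inl u)) (f (Inr e)))" for e
  have c3e_eq: "c3e {u,v} = val (f (Inl v)) (f (Inl u)) (f (Inr {u,v}))" if uv: "u \<noteq> v" for u v
  proof -
    let ?P = "\<lambda>k. \<forall>u' w. {u,v} = {u',w} \<and> u' \<noteq> w \<longrightarrow> k = val (f (Inl w)) (f (Inl u')) (f (Inr {u,v}))"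
    have "?P (val (f (Inl v)) (f (Inl u)) (f (Inr {u,v})))"
    proof (intro allI impI)
      fix u' w assume h: "{u,v} = {u',w} \<and> u' \<noteq> w"
      then have "(u' = u \<and> w = v) \<or> (u' = v \<and> w = u)" by (auto simp: doubleton_eq_iff)
      then show "val (f (Inl v)) (f (Inl u)) (f (Inr {u,v})) = val (f (Inl w)) (f (Inl u')) (f (Inr {u,v}))"
        using val_sym[of "f (Inl v)" "f (Inl u)" "f (Inr {u,v})"] by auto
    qed
    then have "?P (c3e {u,v})" unfolding c3e_def by (rule someI)
    then show ?thesis using uv by auto
  qed
  show ?thesis
  proof (rule exI[where x=c1], rule exI[where x=c2], rule exI[where x=c3v], rule exI[where x=c3e])
    have r1: "c1 v \<in> {1..par_p D}" if "v \<in> V" for v using f_Inl[OF f that] by (auto simp: c1_def)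
    have r2: "c2 {u, v} \<in> {1..par_q D}" if "u \<in> V" "v \<in> V" "E u v" for u v
    proof -
      have "{u,v} \<in> EE" unfolding EE_def using that by blast
      then have "f (Inr {u,v}) \<in> {1..q} \<times> {1..2}" using f_Inr[OF f] by blast
      then show ?thesis by (cases "f (Inr {u,v})") (auto simp: c2_def)
    qed
    have r3: "c3v v \<in> {1..2 * par_p D + par_q D}" if "v \<in> V" for v using f_Inl[OF f that] by (auto simp: c3v_def)
    have r4: "c3e {u, v} \<in> {1..2 * par_p D + par_q D}" if "u \<in> V" "v \<in> V" "E u v" for u v
    proof -
      have "u \<noteq> v" using Eprops that by blast
      moreover have "{u,v} \<in> EE" using that by (auto simp: EE_def)
      ultimately show ?thesis using val_range[OF f_Inl[OF f that(2)] f_Inl[OF f that(1)] f_Inr[OF f] p1] c3e_eq by simp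
    qed
    have pv: "(real (deg V E v) \<ge> real D / 3 \<longrightarrow>
             (\<forall>k\<in>{1..par_p D}.
                \<bar>real (card {u \<in> nbrs V E v. c1 u = k}) - real (deg V E v) / real (par_p D)\<bar>
                  \<le> sqrt (real D))) \<and>
          (real (deg V E v) \<ge> real D / 3 \<longrightarrow>
             (\<forall>k\<in>{1..par_q D}.
                \<bar>real (card {u \<in> nbrs V E v. c2 {u, v} = k}) - real (deg V E v) / real (par_q D)\<bar>
                  \<le> 3 * real D powr (1/3) * ln (real D) powr (2/3))) \<and>
          real (card {u \<in> nbrs V E v. c3e {u, v} = c1 u + c1 v + c2 {u, v}})
             \<ge> real (deg V E v) - (3 + real D powr (-1/6)) * real D powr (2/3) * ln (real D) powr (1/3) \<and>
          (\<forall>k\<in>{1..2 * par_p D + par_q D}.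
             real (card {u \<in> nbrs V E v. c3e {u, v} = k})
               \<le> real D powr (2/3) * ln (real D) powr (1/3)
                 + 5 * real D powr (1/3) * ln (real D) powr (2/3)) \<and>
          (\<forall>u\<in>nbrs V E v. c3v u = c3v v \<longrightarrow> c3e {u, v} = c3v v) \<and>
          (real (deg V E v) \<ge> real D / 3 \<longrightarrow>
             (\<forall>\<alpha>::nat. \<alpha> > 0 \<longrightarrow>
                real (card {u \<in> nbrs V E v. real (deg V E u) \<ge> real D / 3 \<and>
                   real (par_B D * deg V E u * c1 u) + R (deg V E u) D \<in> I_int D \<alpha>})
                \<le> real D powr (5/6) * ln (real D) powr (1/6) + sqrt (real D)))" if v: "v \<in> V" for v
    proof -
      have nb: "cI v (\<lambda>u. f (Inl u))" "cII v (\<lambda>u. f (Inr {u,v}))"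
        "cIII v (f (Inl v)) (\<lambda>u. f (Inl u)) (\<lambda>u. f (Inr {u,v}))"
        "cIV v (f (Inl v)) (\<lambda>u. f (Inl u)) (\<lambda>u. f (Inr {u,v}))" "cVI v (\<lambda>u. f (Inl u))"
        using good v by (auto simp: bad_def)
      have s3: "{u \<in> nbrs V E v. c3e {u, v} = c1 u + c1 v + c2 {u, v}} =
         {u \<in> nbrs V E v. val (f (Inl v)) (f (Inl u)) (f (Inr {u,v})) = fst (f (Inl u)) + fst (f (Inl v)) + fst (f (Inr {u,v}))}"
        using c3e_eq nb_E by (auto simp: c1_def c2_def)
      have s4: "{u \<in> nbrs V E v. c3e {u, v} = k} = {u \<in> nbrs V E v. val (f (Inl v)) (f (Inl u)) (f (Inr {u,v})) = k}" for k
        using c3e_eq nb_E by auto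
      have g1: "real (deg V E v) \<ge> real D / 3 \<longrightarrow>
               (\<forall>k\<in>{1..par_p D}.
                  \<bar>real (card {u \<in> nbrs V E v. c1 u = k}) - real (deg V E v) / real (par_p D)\<bar>
                    \<le> sqrt (real D))"
        using nb(1) by (simp add: cI_def c1_def)
      have g2: "real (deg V E v) \<ge> real D / 3 \<longrightarrow>
               (\<forall>k\<in>{1..par_q D}.
                  \<bar>real (card {u \<in> nbrs V E v. c2 {u, v} = k}) - real (deg V E v) / real (par_q D)\<bar>
                    \<le> 3 * real D powr (1/3) * ln (real D) powr (2/3))"
        using nb(2) by (simp add: cII_def c2_def)
      have g3: "real (card {u \<in> nbrs V E v. c3e {u, v} = c1 u + c1 v + c2 {u, v}})
               \<ge> real (deg V E v) - (3 + real D powr (-1/6)) * real D powr (2/3) * ln (real D) powr (1/3)"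
        using nb(3) unfolding s3 cIII_def .
      have g4: "\<forall>k\<in>{1..2 * par_p D + par_q D}.
               real (card {u \<in> nbrs V E v. c3e {u, v} = k})
                 \<le> real D powr (2/3) * ln (real D) powr (1/3)
                   + 5 * real D powr (1/3) * ln (real D) powr (2/3)"
        using nb(4) unfolding s4 cIV_def .
      have g5: "\<forall>u\<in>nbrs V E v. c3v u = c3v v \<longrightarrow> c3e {u, v} = c3v v"
        using c3e_eq nb_E by (auto simp: c3v_def val_def)
      have g6: "real (deg V E v) \<ge> real D / 3 \<longrightarrow>
               (\<forall>\<alpha>::nat. \<alpha> > 0 \<longrightarrow>
                  real (card {u \<in> nbrs V E v. real (deg V E u) \<ge> real D / 3 \<and>
                     real (par_B D * deg V E u * c1 u) + R (deg V E u) D \<in> I_int D \<alpha>})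
                  \<le> real D powr (5/6) * ln (real D) powr (1/6) + sqrt (real D))"
        using nb(5) by (simp add: cVI_def c1_def)
      show ?thesis by (intro conjI g1 g2 g3 g4 g5 g6)
    qed
    show "(\<forall>v\<in>V. c1 v \<in> {1..par_p D})
       \<and> (\<forall>u\<in>V. \<forall>v\<in>V. E u v \<longrightarrow> c2 {u, v} \<in> {1..par_q D})
       \<and> (\<forall>v\<in>V. c3v v \<in> {1..2 * par_p D + par_q D})
       \<and> (\<forall>u\<in>V. \<forall>v\<in>V. E u v \<longrightarrow> c3e {u, v} \<in> {1..2 * par_p D + par_q D})
       \<and> (\<forall>v\<in>V.
          (real (deg V E v) \<ge> real D / 3 \<longrightarrow>
             (\<forall>k\<in>{1..par_p D}.
                \<bar>real (card {u \<in> nbrs V E v. c1 u = k}) - real (deg V E v) / real (par_p D)\<bar>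
                  \<le> sqrt (real D))) \<and>
          (real (deg V E v) \<ge> real D / 3 \<longrightarrow>
             (\<forall>k\<in>{1..par_q D}.
                \<bar>real (card {u \<in> nbrs V E v. c2 {u, v} = k}) - real (deg V E v) / real (par_q D)\<bar>
                  \<le> 3 * real D powr (1/3) * ln (real D) powr (2/3))) \<and>
          real (card {u \<in> nbrs V E v. c3e {u, v} = c1 u + c1 v + c2 {u, v}})
             \<ge> real (deg V E v) - (3 + real D powr (-1/6)) * real D powr (2/3) * ln (real D) powr (1/3) \<and>
          (\<forall>k\<in>{1..2 * par_p D + par_q D}.
             real (card {u \<in> nbrs V E v. c3e {u, v} = k})
               \<le> real D powr (2/3) * ln (real D) powr (1/3)
                 + 5 * real D powr (1/3) * ln (real D) powr (2/3)) \<and>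
          (\<forall>u\<in>nbrs V E v. c3v u = c3v v \<longrightarrow> c3e {u, v} = c3v v) \<and>
          (real (deg V E v) \<ge> real D / 3 \<longrightarrow>
             (\<forall>\<alpha>::nat. \<alpha> > 0 \<longrightarrow>
                real (card {u \<in> nbrs V E v. real (deg V E u) \<ge> real D / 3 \<and>
                   real (par_B D * deg V E u * c1 u) + R (deg V E u) D \<in> I_int D \<alpha>})
                \<le> real D powr (5/6) * ln (real D) powr (1/6) + sqrt (real D))))"
    proof (intro conjI)
      show "\<forall>v\<in>V. c1 v \<in> {1..par_p D}" by (rule ballI) (rule r1)
      show "\<forall>u\<in>V. \<forall>v\<in>V. E u v \<longrightarrow> c2 {u, v} \<in> {1..par_q D}" by (intro ballI impI) (rule r2)
      show "\<forall>v\<in>V. c3v v \<in> {1..2 * par_p D + par_q D}" by (rule ballI) (rule r3)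
      show "\<forall>u\<in>V. \<forall>v\<in>V. E u v \<longrightarrow> c3e {u, v} \<in> {1..2 * par_p D + par_q D}" by (intro ballI impI) (rule r4)
    qed (rule ballI, rule pv)
  qed
qed

end

theorem mainTheorem2:
  "\<exists>\<epsilon> :: nat \<Rightarrow> real. (\<epsilon> \<longlongrightarrow> 0) at_top \<and>
   (\<exists>D0 :: nat. \<forall>(V :: 'a set) E D (R :: nat \<Rightarrow> nat \<Rightarrow> real).
     simple_graph V E \<and> max_degree V E D \<and> D \<ge> D0 \<and>
     (\<forall>v\<in>V. \<forall>k\<in>{1..par_p D}.
        real (par_B D * deg V E v * k) + R (deg V E v) D \<le> real D ^ 2)
     \<longrightarrow>
     (\<exists>(c1 :: 'a \<Rightarrow> nat) (c2 :: 'a set \<Rightarrow> nat) (c3v :: 'a \<Rightarrow> nat) (c3e :: 'a set \<Rightarrow> nat).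
        (\<forall>v\<in>V. c1 v \<in> {1..par_p D}) \<and>
        (\<forall>u\<in>V. \<forall>v\<in>V. E u v \<longrightarrow> c2 {u, v} \<in> {1..par_q D}) \<and>
        (\<forall>v\<in>V. c3v v \<in> {1..2 * par_p D + par_q D}) \<and>
        (\<forall>u\<in>V. \<forall>v\<in>V. E u v \<longrightarrow> c3e {u, v} \<in> {1..2 * par_p D + par_q D}) \<and>
        (\<forall>v\<in>V.
          (real (deg V E v) \<ge> real D / 3 \<longrightarrow>
             (\<forall>k\<in>{1..par_p D}.
                \<bar>real (card {u \<in> nbrs V E v. c1 u = k}) - real (deg V E v) / real (par_p D)\<bar>
                  \<le> sqrt (real D))) \<and>
          (real (deg V E v) \<ge> real D / 3 \<longrightarrow>
             (\<forall>k\<in>{1..par_q D}.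
                \<bar>real (card {u \<in> nbrs V E v. c2 {u, v} = k}) - real (deg V E v) / real (par_q D)\<bar>
                  \<le> 3 * real D powr (1/3) * ln (real D) powr (2/3))) \<and>
          real (card {u \<in> nbrs V E v. c3e {u, v} = c1 u + c1 v + c2 {u, v}})
             \<ge> real (deg V E v) - (3 + \<epsilon> D) * real D powr (2/3) * ln (real D) powr (1/3) \<and>
          (\<forall>k\<in>{1..2 * par_p D + par_q D}.
             real (card {u \<in> nbrs V E v. c3e {u, v} = k})
               \<le> real D powr (2/3) * ln (real D) powr (1/3)
                 + 5 * real D powr (1/3) * ln (real D) powr (2/3)) \<and>
          (\<forall>u\<in>nbrs V E v. c3v u = c3v v \<longrightarrow> c3e {u, v} = c3v v) \<and>
          (real (deg V E v) \<ge> real D / 3 \<longrightarrow>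
             (\<forall>\<alpha>::nat. \<alpha> > 0 \<longrightarrow>
                real (card {u \<in> nbrs V E v. real (deg V E u) \<ge> real D / 3 \<and>
                   real (par_B D * deg V E u * c1 u) + R (deg V E u) D \<in> I_int D \<alpha>})
                \<le> real D powr (5/6) * ln (real D) powr (1/6) + sqrt (real D))))))"
  proof -
  have ev: "eventually (\<lambda>n::nat. big (real n)) sequentially"
    using eventually_compose_filterlim[OF big_eventually filterlim_real_sequentially] .
  then obtain D0 where D0: "\<And>n. n \<ge> D0 \<Longrightarrow> big (real n)"
    by (auto simp: eventually_sequentially)
  have lim: "((\<lambda>D::nat. real D powr (-1/6)) \<longlongrightarrow> 0) at_top" by real_asymp
  show ?thesis
    apply (rule exI[where x="\<lambda>D::nat. real D powr (-1/6)"])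
    apply (rule conjI[OF lim])
    apply (rule exI[where x=D0])
    apply (intro allI impI)
    apply (rule setting.final)
    apply (unfold setting_def)
    apply (elim conjE)
    apply (intro conjI)
       apply assumption
      apply assumption
     apply (rule D0, assumption)
    apply assumption
    done
qed

end
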